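(* For every $\epsilon>0$ and every integer $d\ge 2$ there exist $\mathbf{w}_1,\dots,\mathbf{w}_n\in\mathbb{S}^{d-1}$ and $v_1,\dots,v_n\in\mathbb{R}$ with $|v_i|\le 1/n$, where $n=\lceil 36/\epsilon^2\rceil$, such that the network $N(\mathbf{x})=\sum_{i=1}^{n}v_i\exp(\mathbf{w}_i^\top\mathbf{x})$ satisfies $$\sup_{\mathbf{x}\in B_d}\big|N(\mathbf{x})-F_d(\|\mathbf{x}\|)\big|\le\epsilon .$$
   Context: $\|\cdot\|$ is the Euclidean norm, $B_d$ the closed unit ball and $\mathbb{S}^{d-1}$ the unit sphere in $\mathbb{R}^d$. For an integer $k\ge0$, $k!!=\prod_{i=0}^{\lceil k/2\rceil-1}(k-2i)$ (so $0!!=1$). For $z\in[0,1]$, $F_d(z)=\sum_{k=0}^{\infty}\frac{(d-2)!!}{(2k)!!\,(d+2k-2)!!}z^{2k}$. *)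

theory Defs
  imports "HOL-Analysis.Analysis"
begin

definition dfact :: "nat \<Rightarrow> nat" where
  "dfact k = (\<Prod>i<(k + 1) div 2. k - 2 * i)"

definition F :: "nat \<Rightarrow> real \<Rightarrow> real" where
  "F d z = (\<Sum>k. real (dfact (d - 2)) / (real (dfact (2 * k)) * real (dfact (d + 2 * k - 2))) * z ^ (2 * k))"

text \<open>Vectors in R^d represented as functions nat => real; only coordinates < d matter.\<close>
definition dinner :: "nat \<Rightarrow> (nat \<Rightarrow> real) \<Rightarrow> (nat \<Rightarrow> real) \<Rightarrow> real" where
  "dinner d x y = (\<Sum>j<d. x j * y j)"

definition dnorm :: "nat \<Rightarrow> (nat \<Rightarrow> real) \<Rightarrow> real" where
  "dnorm d x = sqrt (dinner d x x)"

end

theory Submission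
  imports Defs
begin


definition EQ :: "(real \<times> (nat \<Rightarrow> real)) list \<Rightarrow> ((nat \<Rightarrow> real) \<Rightarrow> real) \<Rightarrow> real" where
  "EQ Q f = (\<Sum>p\<leftarrow>Q. fst p * f (snd p))"

lemma EQ_Nil[simp]: "EQ [] f = 0" by (simp add: EQ_def)
lemma EQ_Cons[simp]: "EQ (p#Q) f = fst p * f (snd p) + EQ Q f" by (simp add: EQ_def)
lemma EQ_append[simp]: "EQ (Q1@Q2) f = EQ Q1 f + EQ Q2 f" by (simp add: EQ_def)
lemma EQ_add: "EQ Q (\<lambda>u. f u + g u) = EQ Q f + EQ Q g" by (induction Q) (auto simp: algebra_simps)
lemma EQ_diff: "EQ Q (\<lambda>u. f u - g u) = EQ Q f - EQ Q g" by (induction Q) (auto simp: algebra_simps)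
lemma EQ_cmult: "EQ Q (\<lambda>u. c * f u) = c * EQ Q f" by (induction Q) (auto simp: algebra_simps)
lemma EQ_sum: "EQ Q (\<lambda>u. \<Sum>i\<in>I. f i u) = (\<Sum>i\<in>I. EQ Q (f i))"
  by (induction Q) (auto simp: sum_distrib_left sum.distrib)
lemma EQ_sum_list: "EQ Q (\<lambda>u. \<Sum>a\<leftarrow>ws. f a u) = (\<Sum>a\<leftarrow>ws. EQ Q (f a))"
  by (induction Q) (auto simp: sum_list_addf sum_list_const_mult)
lemma EQ_const: "EQ Q (\<lambda>u. c) = c * (\<Sum>p\<leftarrow>Q. fst p)"
  by (induction Q) (auto simp: algebra_simps)
lemma EQ_mono: "(\<And>p. p \<in> set Q \<Longrightarrow> fst p \<ge> 0) \<Longrightarrow> (\<And>p. p \<in> set Q \<Longrightarrow> f (snd p) \<le> g (snd p)) \<Longrightarrow> EQ Q f \<le> EQ Q g"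
  by (induction Q) (auto intro!: add_mono mult_left_mono)
lemma EQ_abs: "(\<And>p. p \<in> set Q \<Longrightarrow> fst p \<ge> 0) \<Longrightarrow> \<bar>EQ Q f\<bar> \<le> EQ Q (\<lambda>u. \<bar>f u\<bar>)"
proof (induction Q)
  case (Cons p Q)
  have e1: "\<bar>fst p * f (snd p)\<bar> = fst p * \<bar>f (snd p)\<bar>" using Cons.prems by (simp add: abs_mult)
  have ih: "\<bar>EQ Q f\<bar> \<le> EQ Q (\<lambda>u. \<bar>f u\<bar>)" using Cons by auto
  have "\<bar>EQ (p#Q) f\<bar> \<le> \<bar>fst p * f (snd p)\<bar> + \<bar>EQ Q f\<bar>"
    by (simp add: abs_triangle_ineq)
  also have "\<dots> \<le> fst p * \<bar>f (snd p)\<bar> + EQ Q (\<lambda>u. \<bar>f u\<bar>)"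
    using e1 ih by simp
  finally show ?case by simp
qed simp

lemma dinner_comm: "dinner d a b = dinner d b a"
  by (simp add: dinner_def mult.commute)
lemma dinner_Suc: "dinner (Suc n) a b = dinner n a b + a n * b n"
  by (simp add: dinner_def)

lemma psd_pow:
  fixes c :: "'i \<Rightarrow> real"
  shows "0 \<le> (\<Sum>i\<in>I. \<Sum>j\<in>I. c i * c j * dinner d (a i) (a j) ^ k)"
proof (induction k arbitrary: c)
  case 0
  have "(\<Sum>i\<in>I. \<Sum>j\<in>I. c i * c j * dinner d (a i) (a j) ^ 0) = (\<Sum>i\<in>I. c i) * (\<Sum>j\<in>I. c j)"
    by (simp add: sum_product)
  then show ?case by simp
next
  case (Suc k)
  have eq: "c i * c j * dinner d (a i) (a j) ^ Suc k = (\<Sum>l<d. (c i * a i l) * (c j * a j l) * dinner d (a i) (a j) ^ k)" for i j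
  proof -
    have "c i * c j * dinner d (a i) (a j) ^ Suc k = dinner d (a i) (a j) * (c i * c j * dinner d (a i) (a j) ^ k)"
      by (simp add: algebra_simps)
    also have "\<dots> = (\<Sum>l<d. a i l * a j l * (c i * c j * dinner d (a i) (a j) ^ k))"
      unfolding dinner_def[of d "a i" "a j"] by (simp add: sum_distrib_right)
    finally show ?thesis by (simp add: algebra_simps)
  qed
  have "(\<Sum>i\<in>I. \<Sum>j\<in>I. c i * c j * dinner d (a i) (a j) ^ Suc k)
     = (\<Sum>i\<in>I. \<Sum>j\<in>I. \<Sum>l<d. (c i * a i l) * (c j * a j l) * dinner d (a i) (a j) ^ k)"
    by (intro sum.cong refl eq)
  also have "\<dots> = (\<Sum>i\<in>I. \<Sum>l<d. \<Sum>j\<in>I. (c i * a i l) * (c j * a j l) * dinner d (a i) (a j) ^ k)"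
    by (rule sum.cong[OF refl], rule sum.swap)
  also have "\<dots> = (\<Sum>l<d. \<Sum>i\<in>I. \<Sum>j\<in>I. (c i * a i l) * (c j * a j l) * dinner d (a i) (a j) ^ k)"
    by (rule sum.swap)
  also have "\<dots> \<ge> 0"
    by (rule sum_nonneg) (rule Suc)
  finally show ?case .
qed

lemma exp_sums_real: "(\<lambda>n. x ^ n / fact n) sums exp (x::real)"
  using exp_converges[of x] by (simp add: divide_inverse mult.commute)

lemma psd_exp:
  fixes c :: "'i \<Rightarrow> real"
  assumes "finite I"
  shows "0 \<le> (\<Sum>i\<in>I. \<Sum>j\<in>I. c i * c j * exp (dinner d (a i) (a j)))"
proof -
  have s: "(\<lambda>k. \<Sum>i\<in>I. \<Sum>j\<in>I. c i * c j * (dinner d (a i) (a j) ^ k / fact k))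
     sums (\<Sum>i\<in>I. \<Sum>j\<in>I. c i * c j * exp (dinner d (a i) (a j)))"
    by (intro sums_sum sums_mult exp_sums_real)
  have t: "(\<Sum>i\<in>I. \<Sum>j\<in>I. c i * c j * (dinner d (a i) (a j) ^ k / fact k))
      = (\<Sum>i\<in>I. \<Sum>j\<in>I. c i * c j * dinner d (a i) (a j) ^ k) / fact k" for k
    by (simp add: sum_divide_distrib)
  define F where "F = (\<lambda>k. \<Sum>i\<in>I. \<Sum>j\<in>I. c i * c j * (dinner d (a i) (a j) ^ k / fact k))"
  have nn: "0 \<le> F k" for k
    unfolding F_def t by (intro divide_nonneg_pos psd_pow) auto
  have s': "F sums (\<Sum>i\<in>I. \<Sum>j\<in>I. c i * c j * exp (dinner d (a i) (a j)))"
    using s unfolding F_def .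
  have "0 \<le> suminf F" by (rule suminf_nonneg[OF sums_summable[OF s'] nn])
  also have "suminf F = (\<Sum>i\<in>I. \<Sum>j\<in>I. c i * c j * exp (dinner d (a i) (a j)))"
    by (rule sums_unique[OF s', symmetric])
  finally show ?thesis .
qed

definition kk :: "nat \<Rightarrow> (nat \<Rightarrow> real) \<Rightarrow> (nat \<Rightarrow> real) \<Rightarrow> real" where
  "kk d a b = exp (dinner d a b)"

lemma kk_comm: "kk d a b = kk d b a" by (simp add: kk_def dinner_comm)

definition Bil :: "nat \<Rightarrow> (real \<times> (nat \<Rightarrow> real)) list \<Rightarrow> (real \<times> (nat \<Rightarrow> real)) list \<Rightarrow> real" where
  "Bil d L M = (\<Sum>p\<leftarrow>L. \<Sum>p'\<leftarrow>M. fst p * fst p' * kk d (snd p) (snd p'))"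

lemma Bil_append1[simp]: "Bil d (L1@L2) M = Bil d L1 M + Bil d L2 M"
  by (simp add: Bil_def)
lemma Bil_append2[simp]: "Bil d L (M1@M2) = Bil d L M1 + Bil d L M2"
  by (simp add: Bil_def sum_list_addf)
lemma Bil_Nil1[simp]: "Bil d [] M = 0" by (simp add: Bil_def)
lemma Bil_Nil2[simp]: "Bil d L [] = 0" by (simp add: Bil_def)
lemma Bil_Cons1: "Bil d (p#L) M = fst p * (\<Sum>p'\<leftarrow>M. fst p' * kk d (snd p) (snd p')) + Bil d L M"
  by (simp add: Bil_def sum_list_const_mult mult.assoc)
lemma Bil_sym: "Bil d L M = Bil d M L"
proof -
  have "Bil d L M = (\<Sum>i=0..<length L. \<Sum>j=0..<length M. fst (L!i) * fst (M!j) * kk d (snd (L!i)) (snd (M!j)))"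
    unfolding Bil_def by (simp add: sum_list_sum_nth)
  also have "\<dots> = (\<Sum>j=0..<length M. \<Sum>i=0..<length L. fst (M!j) * fst (L!i) * kk d (snd (M!j)) (snd (L!i)))"
    by (subst sum.swap) (simp add: kk_comm mult.commute)
  also have "\<dots> = Bil d M L"
    unfolding Bil_def by (simp add: sum_list_sum_nth)
  finally show ?thesis .
qed
lemma Bil_scale1: "Bil d (map (\<lambda>p. (t * fst p, snd p)) L) M = t * Bil d L M"
  by (induction L) (auto simp: Bil_Cons1 algebra_simps)
lemma Bil_scale2: "Bil d L (map (\<lambda>p. (t * fst p, snd p)) M) = t * Bil d L M"
  by (metis Bil_scale1 Bil_sym)

lemma Bil_psd: "0 \<le> Bil d L L"
proof -
  have "Bil d L L = (\<Sum>i\<in>{0..<length L}. \<Sum>j\<in>{0..<length L}. fst (L!i) * fst (L!j) * exp (dinner d (snd (L!i)) (snd (L!j))))"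
    unfolding Bil_def kk_def by (simp add: sum_list_sum_nth)
  also have "\<dots> \<ge> 0" by (rule psd_exp) simp
  finally show ?thesis .
qed

lemma Bil_CS:
  "(Bil d L [(1,x)])^2 \<le> kk d x x * Bil d L L"
proof -
  define b where "b = Bil d L [(1,x)]"
  define K where "K = kk d x x"
  have K: "K > 0" by (simp add: K_def kk_def)
  define t where "t = - b / K"
  have "0 \<le> Bil d (L @ [(t,x)]) (L @ [(t,x)])" by (rule Bil_psd)
  also have "Bil d (L @ [(t,x)]) (L @ [(t,x)]) = Bil d L L + 2 * t * b + t^2 * K"
  proof -
    have "Bil d L [(t,x)] = t * b"
      using Bil_scale2[of d L t "[(1,x)]"] by (simp add: b_def)
    moreover have "Bil d [(t,x)] L = t * b"
      using \<open>Bil d L [(t,x)] = t * b\<close> by (metis Bil_sym)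
    moreover have "Bil d [(t,x)] [(t,x)] = t^2 * K"
      by (simp add: Bil_def K_def power2_eq_square)
    ultimately show ?thesis by simp
  qed
  also have "\<dots> = Bil d L L - b^2 / K"
  proof -
    have "2 * t * b + t^2 * K + b^2 / K = 0"
      using K unfolding t_def by (simp add: power2_eq_square divide_simps)
    then show ?thesis by simp
  qed
  finally have "b^2 / K \<le> Bil d L L" by simp
  then have "b^2 \<le> Bil d L L * K" using K by (simp add: pos_divide_le_eq)
  then show ?thesis unfolding b_def K_def by (simp only: mult.commute)
qed


lemma EQ_cong: "(\<And>p. p \<in> set Q \<Longrightarrow> f (snd p) = g (snd p)) \<Longrightarrow> EQ Q f = EQ Q g"
  by (induction Q) auto

definition SS :: "(real \<times> (nat \<Rightarrow> real)) list \<Rightarrow> (nat \<Rightarrow> real) list \<Rightarrow> (real \<times> (nat \<Rightarrow> real)) list" where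
  "SS Q ws = map (\<lambda>a. (1,a)) ws @ map (\<lambda>p. (- real (length ws) * fst p, snd p)) Q"

lemma Bil_W1: "Bil d (map (\<lambda>a. (1,a)) ws) [(1,w)] = (\<Sum>a\<leftarrow>ws. kk d a w)"
  by (simp add: Bil_def comp_def)
lemma Bil_WQ: "Bil d (map (\<lambda>a. (1,a)) ws) Q = (\<Sum>a\<leftarrow>ws. EQ Q (kk d a))"
  by (simp add: Bil_def comp_def EQ_def mult.assoc)
lemma Bil_1Q: "Bil d [(1,w)] Q = EQ Q (kk d w)"
  by (simp add: Bil_def EQ_def)
lemma Bil_QQ: "Bil d Q Q = EQ Q (\<lambda>w. EQ Q (kk d w))"
  by (simp add: Bil_def EQ_def sum_list_const_mult mult.assoc)
lemma Bil_11: "Bil d [(1,w)] [(1,w)] = kk d w w"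
  by (simp add: Bil_def)

lemma Bil_QQ_ge1:
  assumes Qw: "\<And>p. p \<in> set Q \<Longrightarrow> fst p \<ge> 0" and Qs: "(\<Sum>p\<leftarrow>Q. fst p) = 1"
  shows "Bil d Q Q \<ge> 1"
proof -
  have "(\<Sum>p\<leftarrow>Q. \<Sum>p'\<leftarrow>Q. fst p * fst p' * (1 + dinner d (snd p) (snd p')))
      \<le> (\<Sum>p\<leftarrow>Q. \<Sum>p'\<leftarrow>Q. fst p * fst p' * kk d (snd p) (snd p'))"
    by (intro sum_list_mono mult_left_mono) (auto simp: kk_def Qw)
  also have "\<dots> = Bil d Q Q" by (simp add: Bil_def)
  finally have 1: "(\<Sum>p\<leftarrow>Q. \<Sum>p'\<leftarrow>Q. fst p * fst p' * (1 + dinner d (snd p) (snd p'))) \<le> Bil d Q Q" .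
  have 2: "(\<Sum>p\<leftarrow>Q. \<Sum>p'\<leftarrow>Q. fst p * fst p' * (1 + dinner d (snd p) (snd p')))
     = (\<Sum>p\<leftarrow>Q. \<Sum>p'\<leftarrow>Q. fst p * fst p') + (\<Sum>p\<leftarrow>Q. \<Sum>p'\<leftarrow>Q. fst p * fst p' * dinner d (snd p) (snd p'))"
    by (simp add: algebra_simps sum_list_addf)
  have 3: "(\<Sum>p\<leftarrow>Q. \<Sum>p'\<leftarrow>Q. fst p * fst p') = 1"
    by (simp add: sum_list_const_mult Qs)
  have "(\<Sum>p\<leftarrow>Q. \<Sum>p'\<leftarrow>Q. fst p * fst p' * dinner d (snd p) (snd p'))
      = (\<Sum>i\<in>{0..<length Q}. \<Sum>j\<in>{0..<length Q}. fst (Q!i) * fst (Q!j) * dinner d (snd (Q!i)) (snd (Q!j)) ^ 1)"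
    by (simp add: sum_list_sum_nth)
  also have "\<dots> \<ge> 0" by (rule psd_pow)
  finally show ?thesis using 1 2 3 by linarith
qed

lemma herding_step:
  assumes Qw: "\<And>p. p \<in> set Q \<Longrightarrow> fst p \<ge> 0" and Qs: "(\<Sum>p\<leftarrow>Q. fst p) = 1"
    and Qu: "\<And>p. p \<in> set Q \<Longrightarrow> dinner d (snd p) (snd p) = 1"
  shows "\<exists>p\<in>set Q. Bil d (SS Q (ws @ [snd p])) (SS Q (ws @ [snd p]))
           \<le> Bil d (SS Q ws) (SS Q ws) + exp 1 - Bil d Q Q + 1"
proof -
  define m where "m = real (length ws)"
  define W where "W = map (\<lambda>a. (1::real,a)) ws"
  define X where "X = Bil d W W"
  define Y where "Y = Bil d W Q"
  define Z where "Z = Bil d Q Q"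
  define g1 where "g1 = (\<lambda>w. \<Sum>a\<leftarrow>ws. kk d a w)"
  define g2 where "g2 = (\<lambda>w. EQ Q (kk d w))"
  define f where "f = (\<lambda>w. Bil d (SS Q (ws @ [w])) (SS Q (ws @ [w])))"
  have Qm: "\<And>t. Bil d (map (\<lambda>p. (t * fst p, snd p)) Q) M = t * Bil d Q M" for M by (rule Bil_scale1)
  have Qm2: "\<And>t. Bil d M (map (\<lambda>p. (t * fst p, snd p)) Q) = t * Bil d M Q" for M by (rule Bil_scale2)
  have fw: "f w = X + 2 * g1 w + kk d w w - 2 * (m+1) * (Y + g2 w) + (m+1)^2 * Z" for w
  proof -
    have s: "SS Q (ws @ [w]) = W @ [(1,w)] @ map (\<lambda>p. (- (m+1) * fst p, snd p)) Q"
      by (simp add: SS_def W_def m_def)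
    have a1: "Bil d W [(1,w)] = g1 w" by (simp add: W_def g1_def Bil_W1)
    have a2: "Bil d [(1,w)] W = g1 w" using a1 by (simp add: Bil_sym)
    have a3: "Bil d [(1,w)] Q = g2 w" by (simp add: g2_def Bil_1Q)
    have a4: "Bil d Q [(1,w)] = g2 w" using a3 by (simp add: Bil_sym)
    have a5: "Bil d Q W = Y" by (simp add: Y_def Bil_sym)
    show ?thesis
      unfolding f_def s Bil_append1 Bil_append2 Qm Qm2 a1 a2 a3 a4 a5 Bil_11 X_def[symmetric] Y_def[symmetric] Z_def[symmetric]
      by (simp add: power2_eq_square algebra_simps)
  qed
  have f0: "Bil d (SS Q ws) (SS Q ws) = X - 2 * m * Y + m^2 * Z"
  proof -
    have s: "SS Q ws = W @ map (\<lambda>p. (- m * fst p, snd p)) Q"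
      by (simp add: SS_def W_def m_def)
    have a5: "Bil d Q W = Y" by (simp add: Y_def Bil_sym)
    show ?thesis unfolding s Bil_append1 Bil_append2 Qm Qm2 a5 X_def[symmetric] Y_def[symmetric] Z_def[symmetric]
      by (simp add: power2_eq_square algebra_simps)
  qed
  have E1: "EQ Q g1 = Y"
    unfolding g1_def Y_def W_def by (simp add: EQ_sum_list Bil_WQ kk_comm)
  have E2: "EQ Q g2 = Z" unfolding g2_def Z_def by (simp add: Bil_QQ)
  have E3: "EQ Q (\<lambda>w. kk d w w) = exp 1"
  proof -
    have "EQ Q (\<lambda>w. kk d w w) = EQ Q (\<lambda>w. exp 1)"
      by (rule EQ_cong) (simp add: kk_def Qu)
    then show ?thesis by (simp add: EQ_const Qs)
  qed
  have EC: "EQ Q (\<lambda>w. c) = c" for c by (simp add: EQ_const Qs)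
  have "EQ Q f = EQ Q (\<lambda>w. X + 2 * g1 w + kk d w w - 2 * (m+1) * (Y + g2 w) + (m+1)^2 * Z)"
    by (rule arg_cong[where f="EQ Q"], rule ext, rule fw)
  also have "\<dots> = X + 2 * Y + exp 1 - 2 * (m+1) * (Y + Z) + (m+1)^2 * Z"
    by (simp add: EQ_add EQ_diff EQ_cmult EC E1 E2 E3)
  also have "\<dots> = Bil d (SS Q ws) (SS Q ws) + exp 1 - Z"
    by (simp add: f0 power2_eq_square algebra_simps)
  finally have Ef: "EQ Q f = Bil d (SS Q ws) (SS Q ws) + exp 1 - Z" .
  have "\<exists>p\<in>set Q. f (snd p) \<le> EQ Q f + 1"
  proof (rule ccontr)
    assume "\<not> ?thesis"
    then have "\<And>p. p \<in> set Q \<Longrightarrow> (\<lambda>w. EQ Q f + 1) (snd p) \<le> f (snd p)" by force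
    then have "EQ Q (\<lambda>w. EQ Q f + 1) \<le> EQ Q f" using EQ_mono[OF Qw, where f="\<lambda>w. EQ Q f + 1" and g=f] by blast
    then show False by (simp add: EC)
  qed
  then show ?thesis using Ef unfolding f_def Z_def by auto
qed

lemma herding:
  assumes Qw: "\<And>p. p \<in> set Q \<Longrightarrow> fst p \<ge> 0" and Qs: "(\<Sum>p\<leftarrow>Q. fst p) = 1"
    and Qu: "\<And>p. p \<in> set Q \<Longrightarrow> dinner d (snd p) (snd p) = 1"
  shows "\<exists>ws. length ws = m \<and> set ws \<subseteq> snd ` set Q \<and>
           Bil d (SS Q ws) (SS Q ws) \<le> real m * exp 1"
proof (induction m)
  case 0
  have "Bil d (SS Q []) (SS Q []) = 0"
    by (simp add: SS_def Bil_def comp_def)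
  then show ?case by auto
next
  case (Suc m)
  then obtain ws where ws: "length ws = m" "set ws \<subseteq> snd ` set Q"
      "Bil d (SS Q ws) (SS Q ws) \<le> real m * exp 1" by auto
  obtain p where p: "p \<in> set Q" and le: "Bil d (SS Q (ws @ [snd p])) (SS Q (ws @ [snd p]))
           \<le> Bil d (SS Q ws) (SS Q ws) + exp 1 - Bil d Q Q + 1"
    using herding_step[OF Qw Qs Qu] by blast
  have "Bil d Q Q \<ge> 1" by (rule Bil_QQ_ge1[OF Qw Qs])
  then have "Bil d (SS Q (ws @ [snd p])) (SS Q (ws @ [snd p])) \<le> real (Suc m) * exp 1"
    using le ws(3) by (simp add: algebra_simps)
  moreover have "set (ws @ [snd p]) \<subseteq> snd ` set Q" using ws(2) p by auto
  ultimately show ?case using ws(1) by (intro exI[of _ "ws @ [snd p]"]) auto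
qed

lemma kernel_approx:
  assumes Qw: "\<And>p. p \<in> set Q \<Longrightarrow> fst p \<ge> 0" and Qs: "(\<Sum>p\<leftarrow>Q. fst p) = 1"
    and Qu: "\<And>p. p \<in> set Q \<Longrightarrow> dinner d (snd p) (snd p) = 1"
    and n: "n \<ge> 1"
  shows "\<exists>ws. length ws = n \<and> set ws \<subseteq> snd ` set Q \<and>
           (\<forall>x. dinner d x x \<le> 1 \<longrightarrow>
              \<bar>(\<Sum>a\<leftarrow>ws. exp (dinner d a x)) / real n - EQ Q (\<lambda>u. exp (dinner d u x))\<bar> \<le> 3 / sqrt (real n))"
proof -
  obtain ws where ws: "length ws = n" "set ws \<subseteq> snd ` set Q"
      "Bil d (SS Q ws) (SS Q ws) \<le> real n * exp 1"
    using herding[OF Qw Qs Qu] by blast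
  have "\<bar>(\<Sum>a\<leftarrow>ws. exp (dinner d a x)) / real n - EQ Q (\<lambda>u. exp (dinner d u x))\<bar> \<le> 3 / sqrt (real n)"
    if x: "dinner d x x \<le> 1" for x
  proof -
    define b where "b = Bil d (SS Q ws) [(1,x)]"
    have b: "b = (\<Sum>a\<leftarrow>ws. exp (dinner d a x)) - real n * EQ Q (\<lambda>u. exp (dinner d u x))"
    proof -
      have "Bil d (map (\<lambda>p. (- real n * fst p, snd p)) Q) [(1,x)] = - real n * Bil d Q [(1,x)]"
        by (rule Bil_scale1)
      moreover have "Bil d Q [(1,x)] = EQ Q (\<lambda>u. exp (dinner d u x))"
        by (simp add: Bil_def EQ_def kk_def)
      ultimately show ?thesis
        unfolding b_def SS_def using ws(1) by (simp add: Bil_W1 kk_def)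
    qed
    have kx: "kk d x x \<le> 3"
      using x exp_le by (simp add: kk_def) (meson exp_le_cancel_iff order_trans)
    have "b^2 \<le> kk d x x * Bil d (SS Q ws) (SS Q ws)"
      unfolding b_def by (rule Bil_CS)
    also have "\<dots> \<le> 3 * (real n * 3)"
      using kx ws(3) exp_le Bil_psd[of d "SS Q ws"]
    proof (intro mult_mono)
      show "Bil d (SS Q ws) (SS Q ws) \<le> real n * 3"
        using ws(3) exp_le by (meson mult_left_mono of_nat_0_le_iff order_trans)
    qed (use kx Bil_psd[of d "SS Q ws"] in auto)
    finally have b2: "b^2 \<le> 9 * real n" by simp
    have "\<bar>b\<bar> \<le> sqrt (9 * real n)"
      using b2 real_le_rsqrt by (metis abs_le_square_iff real_sqrt_abs real_sqrt_le_iff)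
    also have "sqrt (9 * real n) = 3 * sqrt (real n)" by (simp add: real_sqrt_mult)
    finally have bb: "\<bar>b\<bar> \<le> 3 * sqrt (real n)" .
    have npos: "real n > 0" using n by simp
    have eq: "(\<Sum>a\<leftarrow>ws. exp (dinner d a x)) / real n - EQ Q (\<lambda>u. exp (dinner d u x)) = b / real n"
      using npos by (simp add: b field_simps)
    have "\<bar>b / real n\<bar> = \<bar>b\<bar> / real n" using npos by simp
    also have "\<dots> \<le> 3 * sqrt (real n) / real n"
      by (rule divide_right_mono[OF bb]) simp
    also have "3 * sqrt (real n) / real n = 3 / sqrt (real n)"
    proof -
      have sq: "sqrt (real n) * sqrt (real n) = real n" by simp
      have sp: "sqrt (real n) > 0" using npos by simp
      show ?thesis using sp by (subst sq[symmetric]) (simp add: field_simps)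
    qed
    finally have "\<bar>b / real n\<bar> \<le> 3 / sqrt (real n)" .
    then show ?thesis using eq by simp
  qed
  then show ?thesis using ws(1,2) by blast
qed


definition W :: "nat \<Rightarrow> nat \<Rightarrow> real" where
  "W a b = integral {-pi/2..pi/2} (\<lambda>t. cos t ^ a * sin t ^ b)"

lemma cs_integrable: "(\<lambda>t::real. cos t ^ a * sin t ^ b) integrable_on {x..y}"
  by (intro integrable_continuous_real continuous_intros)

lemma cs_deriv:
  "((\<lambda>t. cos t ^ Suc a * sin t ^ Suc b) has_real_derivative
     (real (Suc b) * (cos t ^ (a+2) * sin t ^ b) - real (Suc a) * (cos t ^ a * sin t ^ (b+2)))) (at t)"
proof -
  have "((\<lambda>t. cos t ^ Suc a * sin t ^ Suc b) has_real_derivative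
     ((1 + real a) * (- sin t * cos t ^ a) * sin t ^ Suc b + (1 + real b) * (cos t * sin t ^ b) * cos t ^ Suc a)) (at t)"
    by (rule DERIV_mult[OF DERIV_power_Suc[OF DERIV_cos] DERIV_power_Suc[OF DERIV_sin]])
  moreover have "(1 + real a) * (- sin t * cos t ^ a) * sin t ^ Suc b + (1 + real b) * (cos t * sin t ^ b) * cos t ^ Suc a
     = real (Suc b) * (cos t ^ (a+2) * sin t ^ b) - real (Suc a) * (cos t ^ a * sin t ^ (b+2))"
    by (simp add: power_add power2_eq_square algebra_simps)
  ultimately show ?thesis by (rule DERIV_cong)
qed

lemma W_rec1: "real (Suc a) * W a (b+2) = real (Suc b) * W (a+2) b"
proof -
  let ?D = "\<lambda>t. real (Suc b) * (cos t ^ (a+2) * sin t ^ b) - real (Suc a) * (cos t ^ a * sin t ^ (b+2))"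
  have "(?D has_integral ((\<lambda>t. cos t ^ Suc a * sin t ^ Suc b) (pi/2) - (\<lambda>t. cos t ^ Suc a * sin t ^ Suc b) (-pi/2))) {-pi/2..pi/2}"
  proof (rule fundamental_theorem_of_calculus)
    fix x :: real
    show "((\<lambda>t. cos t ^ Suc a * sin t ^ Suc b) has_vector_derivative ?D x) (at x within {-pi/2..pi/2})"
      using has_field_derivative_at_within[OF cs_deriv] unfolding has_real_derivative_iff_has_vector_derivative .
  qed simp
  note h = this
  have "integral {-pi/2..pi/2} ?D = 0" using integral_unique[OF h] by simp
  moreover have "integral {-pi/2..pi/2} ?D = real (Suc b) * W (a+2) b - real (Suc a) * W a (b+2)"
    unfolding W_def
    by (subst integral_diff) (auto intro!: integrable_continuous_real continuous_intros simp: integral_mult_right)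
  ultimately show ?thesis by simp
qed

lemma W_split: "W a b = W (a+2) b + W a (b+2)"
proof -
  have "(\<lambda>t::real. cos t ^ a * sin t ^ b) = (\<lambda>t. cos t ^ (a+2) * sin t ^ b + cos t ^ a * sin t ^ (b+2))"
  proof
    fix t :: real
    have e: "sin t ^ (b+2) = sin t ^ b * (1 - (cos t)^2)"
    proof -
      have "sin t ^ (b+2) = sin t ^ b * (sin t)^2" by (rule power_add)
      also have "(sin t)^2 = 1 - (cos t)^2" by (rule sin_squared_eq)
      finally show ?thesis .
    qed
    show "cos t ^ a * sin t ^ b = cos t ^ (a+2) * sin t ^ b + cos t ^ a * sin t ^ (b+2)"
      unfolding e by (simp add: power_add algebra_simps power2_eq_square)
  qed
  then show ?thesis unfolding W_def
    by (simp only:) (rule integral_add[OF cs_integrable cs_integrable])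
qed

lemma W_b2: "W a (b+2) * real (a+b+2) = real (Suc b) * W a b"
  using W_rec1[of a b] W_split[of a b] by (simp add: algebra_simps)

lemma W_a2: "W (a+2) b * real (a+b+2) = real (Suc a) * W a b"
  using W_rec1[of a b] W_split[of a b] by (simp add: algebra_simps)

lemma W_odd1: "W a 1 = 0"
proof -
  let ?D = "\<lambda>t. - real (Suc a) * (cos t ^ a * sin t ^ 1)"
  have d: "((\<lambda>t. cos t ^ Suc a) has_real_derivative ?D t) (at t)" for t
    by (rule DERIV_cong[OF DERIV_power_Suc[OF DERIV_cos]]) (simp add: algebra_simps)
  have "(?D has_integral ((\<lambda>t. cos t ^ Suc a) (pi/2) - (\<lambda>t. cos t ^ Suc a) (-pi/2))) {-pi/2..pi/2}"
  proof (rule fundamental_theorem_of_calculus)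
    fix x :: real
    show "((\<lambda>t. cos t ^ Suc a) has_vector_derivative ?D x) (at x within {-pi/2..pi/2})"
      using has_field_derivative_at_within[OF d] unfolding has_real_derivative_iff_has_vector_derivative .
  qed simp
  note h = this
  have "integral {-pi/2..pi/2} ?D = 0" using integral_unique[OF h] by simp
  moreover have "integral {-pi/2..pi/2} ?D = - real (Suc a) * W a 1"
    unfolding W_def by (simp add: integral_mult_right cs_integrable del: power_one_right)
  ultimately show ?thesis by simp
qed

lemma W_odd: "W a (2*l+1) = 0"
proof (induction l)
  case 0 then show ?case using W_odd1 by simp
next
  case (Suc l)
  have "W a (2*l+1+2) * real (a + (2*l+1) + 2) = real (Suc (2*l+1)) * W a (2*l+1)" by (rule W_b2)
  then have "W a (2*l+1+2) = 0" using Suc by simp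
  then show ?case by (simp add: algebra_simps)
qed

lemma W_00: "W 0 0 = pi"
  by (simp add: W_def)

lemma W_10: "W 1 0 = 2"
proof -
  have "(cos has_integral (sin (pi/2) - sin (-pi/2))) {-pi/2..pi/2}"
  proof (rule fundamental_theorem_of_calculus)
    fix x :: real
    show "(sin has_vector_derivative cos x) (at x within {-pi/2..pi/2})"
    proof -
      have "(sin has_real_derivative cos x) (at x)" by (rule DERIV_sin)
      then show ?thesis unfolding has_real_derivative_iff_has_vector_derivative by (rule has_vector_derivative_at_within)
    qed
  qed simp
  note h = this
  show ?thesis using integral_unique[OF h] by (simp add: W_def)
qed

lemma W_pos: "W a 0 > 0"
proof (induction a rule: nat_less_induct)
  case (1 a)
  show ?case
  proof (cases a)
    case 0 then show ?thesis using W_00 by simp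
  next
    case (Suc a')
    show ?thesis
    proof (cases a')
      case 0 then show ?thesis using Suc W_10 by simp
    next
      case (Suc a'')
      then have "a = a'' + 2" using \<open>a = Suc a'\<close> by simp
      have "W (a''+2) 0 * real (a''+0+2) = real (Suc a'') * W a'' 0" by (rule W_a2)
      moreover have "W a'' 0 > 0" using 1 \<open>a = a'' + 2\<close> by simp
      ultimately have "W (a''+2) 0 > 0"
        by (metis add_is_0 mult_pos_pos of_nat_0_less_iff zero_less_Suc zero_less_mult_pos2 zero_neq_numeral neq0_conv)
      then show ?thesis using \<open>a = a'' + 2\<close> by simp
    qed
  qed
qed

lemma W_even_a: "W (a + 2*j) 0 = W a 0 * (\<Prod>i<j. real (a+2*i+1) / real (a+2*i+2))"
proof (induction j)
  case 0 then show ?case by simp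
next
  case (Suc j)
  have "W (a + 2*j + 2) 0 * real (a + 2*j + 0 + 2) = real (Suc (a + 2*j)) * W (a+2*j) 0" by (rule W_a2)
  then have "W (a + 2*j + 2) 0 = W (a+2*j) 0 * (real (a+2*j+1) / real (a+2*j+2))"
    by (simp add: field_simps)
  then show ?case using Suc by (simp add: algebra_simps)
qed

lemma W_even_b: "W a (2*l) = W a 0 * (\<Prod>i<l. real (2*i+1) / real (a+2*i+2))"
proof (induction l)
  case 0 then show ?case by simp
next
  case (Suc l)
  have "W a (2*l + 2) * real (a + 2*l + 2) = real (Suc (2*l)) * W a (2*l)" by (rule W_b2)
  then have "W a (2*l + 2) = W a (2*l) * (real (2*l+1) / real (a+2*l+2))"
    by (simp add: field_simps)
  then show ?case using Suc by (simp add: algebra_simps)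
qed


lemma cos_lip: fixes s t :: real shows "\<bar>cos s - cos t\<bar> \<le> \<bar>s - t\<bar>"
proof -
  have *: "\<bar>cos s - cos t\<bar> \<le> \<bar>s - t\<bar>" if lt: "t < s" for s t :: real
  proof -
    obtain z where "cos s - cos t = (s - t) * (- sin z)"
      using MVT2[OF lt, of cos "\<lambda>x. - sin x"] by (auto intro: DERIV_cos)
    then have "\<bar>cos s - cos t\<bar> = \<bar>s - t\<bar> * \<bar>sin z\<bar>" by (simp add: abs_mult)
    also have "\<dots> \<le> \<bar>s - t\<bar> * 1" by (intro mult_left_mono) auto
    finally show ?thesis by simp
  qed
  show ?thesis
    using *[of t s] *[of s t] by (cases s t rule: linorder_cases) (auto simp: abs_minus_commute)
qed

lemma sin_lip: fixes s t :: real shows "\<bar>sin s - sin t\<bar> \<le> \<bar>s - t\<bar>"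
proof -
  have *: "\<bar>sin s - sin t\<bar> \<le> \<bar>s - t\<bar>" if lt: "t < s" for s t :: real
  proof -
    obtain z where "sin s - sin t = (s - t) * cos z"
      using MVT2[OF lt, of sin cos] by (auto intro: DERIV_sin)
    then have "\<bar>sin s - sin t\<bar> = \<bar>s - t\<bar> * \<bar>cos z\<bar>" by (simp add: abs_mult)
    also have "\<dots> \<le> \<bar>s - t\<bar> * 1" by (intro mult_left_mono) auto
    finally show ?thesis by simp
  qed
  show ?thesis
    using *[of t s] *[of s t] by (cases s t rule: linorder_cases) (auto simp: abs_minus_commute)
qed

lemma pow_lip:
  fixes x y :: real
  assumes "\<bar>x\<bar> \<le> 1" "\<bar>y\<bar> \<le> 1"
  shows "\<bar>x^n - y^n\<bar> \<le> real n * \<bar>x - y\<bar>"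
proof (induction n)
  case 0 then show ?case by simp
next
  case (Suc n)
  have "x^Suc n - y^Suc n = x * (x^n - y^n) + (x - y) * y^n" by (simp add: algebra_simps)
  then have "\<bar>x^Suc n - y^Suc n\<bar> \<le> \<bar>x\<bar> * \<bar>x^n - y^n\<bar> + \<bar>x - y\<bar> * \<bar>y\<bar>^n"
    by (metis abs_mult abs_triangle_ineq power_abs)
  also have "\<dots> \<le> 1 * (real n * \<bar>x - y\<bar>) + \<bar>x - y\<bar> * 1"
    using assms Suc by (intro add_mono mult_mono power_le_one) auto
  finally show ?case by (simp add: algebra_simps)
qed

lemma cs_lip: fixes s t :: real shows "\<bar>cos s ^ a * sin s ^ b - cos t ^ a * sin t ^ b\<bar> \<le> real (a+b) * \<bar>s - t\<bar>"
proof -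
  have "cos s ^ a * sin s ^ b - cos t ^ a * sin t ^ b
      = (cos s ^ a - cos t ^ a) * sin s ^ b + cos t ^ a * (sin s ^ b - sin t ^ b)"
    by (simp add: algebra_simps)
  then have "\<bar>cos s ^ a * sin s ^ b - cos t ^ a * sin t ^ b\<bar>
      \<le> \<bar>cos s ^ a - cos t ^ a\<bar> * \<bar>sin s\<bar> ^ b + \<bar>cos t\<bar> ^ a * \<bar>sin s ^ b - sin t ^ b\<bar>"
    by (metis abs_mult abs_triangle_ineq power_abs)
  also have "\<dots> \<le> (real a * \<bar>s - t\<bar>) * 1 + 1 * (real b * \<bar>s - t\<bar>)"
  proof (intro add_mono mult_mono)
    show "\<bar>cos s ^ a - cos t ^ a\<bar> \<le> real a * \<bar>s - t\<bar>"
      using pow_lip[of "cos s" "cos t" a] mult_left_mono[OF cos_lip[of s t], of "real a"] by simp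
    show "\<bar>sin s ^ b - sin t ^ b\<bar> \<le> real b * \<bar>s - t\<bar>"
      using pow_lip[of "sin s" "sin t" b] mult_left_mono[OF sin_lip[of s t], of "real b"] by simp
  qed (auto intro: power_le_one)
  finally show ?thesis by (simp add: algebra_simps)
qed

lemma riemann_bound:
  fixes g :: "real \<Rightarrow> real"
  assumes ab: "a \<le> b" and N: "N > 0" and cont: "continuous_on {a..b} g" and L: "L \<ge> 0"
    and lip: "\<And>s t. s \<in> {a..b} \<Longrightarrow> t \<in> {a..b} \<Longrightarrow> \<bar>g s - g t\<bar> \<le> L * \<bar>s - t\<bar>"
  shows "\<bar>(b - a) / real N * (\<Sum>i<N. g (a + (real i + 1/2) * ((b - a) / real N))) - integral {a..b} g\<bar>
          \<le> L * (b - a)^2 / real N"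
proof -
  define h where "h = (b - a) / real N"
  have h0: "h \<ge> 0" using ab N by (simp add: h_def)
  have hN: "a + real N * h = b" using N by (simp add: h_def)
  have sub: "{x..y} \<subseteq> {a..b}" if "a \<le> x" "y \<le> b" for x y using that by auto
  have int: "g integrable_on {x..y}" if "a \<le> x" "y \<le> b" for x y
    by (rule integrable_continuous_real, rule continuous_on_subset[OF cont sub[OF that]])
  have A: "integral {a..a + real k * h} g = (\<Sum>i<k. integral {a + real i * h..a + real (Suc i) * h} g)"
    if "k \<le> N" for k
    using that
  proof (induction k)
    case 0 then show ?case by simp
  next
    case (Suc k)
    have le: "a + real (Suc k) * h \<le> b"
    proof -
      have "real (Suc k) * h \<le> real N * h" using Suc.prems h0 by (intro mult_right_mono) auto
      then show ?thesis using hN by linarith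
    qed
    have "integral {a..a + real k * h} g + integral {a + real k * h..a + real (Suc k) * h} g
        = integral {a..a + real (Suc k) * h} g"
      by (rule Henstock_Kurzweil_Integration.integral_combine) (use h0 le in \<open>auto intro!: int mult_right_mono\<close>)
    then show ?case using Suc by simp
  qed
  have B: "\<bar>h * g (a + (real i + 1/2) * h) - integral {a + real i * h..a + real (Suc i) * h} g\<bar> \<le> L * h * h"
    if "i < N" for i
  proof -
    define c where "c = a + real i * h"
    define m where "m = a + (real i + 1/2) * h"
    have c0: "a \<le> c" using h0 by (simp add: c_def)
    have c1: "c + h \<le> b"
    proof -
      have "real (Suc i) * h \<le> real N * h" using that h0 by (intro mult_right_mono) auto
      then show ?thesis using hN by (simp add: c_def algebra_simps)
    qed
    have ch: "a + real (Suc i) * h = c + h" by (simp add: c_def algebra_simps)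
    have mc: "c \<le> m" "m \<le> c + h" using h0 by (auto simp: c_def m_def algebra_simps)
    have i1: "g integrable_on {c..c+h}" using c0 c1 by (intro int) auto
    have ic: "integral {c..c+h} (\<lambda>t. g m) = h * g m" using h0 by (simp add: content_real)
    have "integral {c..c+h} (\<lambda>t. g m - g t) = integral {c..c+h} (\<lambda>t. g m) - integral {c..c+h} g"
      by (rule integral_diff) (auto intro: i1)
    then have eq: "h * g m - integral {c..c+h} g = integral {c..c+h} (\<lambda>t. g m - g t)"
      using ic by linarith
    have "norm (integral {c..c+h} (\<lambda>t. g m - g t)) \<le> integral {c..c+h} (\<lambda>t. L * h)"
    proof (rule integral_norm_bound_integral)
      show "(\<lambda>t. g m - g t) integrable_on {c..c+h}" using i1 by (intro integrable_diff) auto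
      show "(\<lambda>t. L * h) integrable_on {c..c+h}" by (intro integrable_continuous_real continuous_intros)
      fix t assume t: "t \<in> {c..c+h}"
      have "\<bar>g m - g t\<bar> \<le> L * \<bar>m - t\<bar>" using t mc c0 c1 by (intro lip) auto
      also have "\<dots> \<le> L * h" using t mc L by (intro mult_left_mono) auto
      finally show "norm (g m - g t) \<le> L * h" by simp
    qed
    also have "integral {c..c+h} (\<lambda>t. L * h) = L * h * h" using h0 by (simp add: content_real)
    finally show ?thesis unfolding ch using eq by (simp add: m_def c_def)
  qed
  have "(b - a) / real N * (\<Sum>i<N. g (a + (real i + 1/2) * ((b - a) / real N))) - integral {a..b} g
      = (\<Sum>i<N. h * g (a + (real i + 1/2) * h) - integral {a + real i * h..a + real (Suc i) * h} g)"
    using A[of N] hN by (simp add: h_def sum_subtractf sum_distrib_left)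
  also have "\<bar>\<dots>\<bar> \<le> (\<Sum>i<N. L * h * h)"
    by (rule order_trans[OF sum_abs]) (intro sum_mono B, auto)
  also have "\<dots> = L * (b - a)^2 / real N" using N by (simp add: h_def power2_eq_square)
  finally show ?thesis .
qed

lemma riemann_tendsto:
  fixes g :: "real \<Rightarrow> real"
  assumes ab: "a \<le> b" and cont: "continuous_on {a..b} g" and L: "L \<ge> 0"
    and lip: "\<And>s t. s \<in> {a..b} \<Longrightarrow> t \<in> {a..b} \<Longrightarrow> \<bar>g s - g t\<bar> \<le> L * \<bar>s - t\<bar>"
  shows "(\<lambda>N. (b - a) / real N * (\<Sum>i<N. g (a + (real i + 1/2) * ((b - a) / real N)))) \<longlonglongrightarrow> integral {a..b} g"
proof -
  have "(\<lambda>N. (b - a) / real N * (\<Sum>i<N. g (a + (real i + 1/2) * ((b - a) / real N))) - integral {a..b} g) \<longlonglongrightarrow> 0"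
  proof (rule Lim_null_comparison)
    show "\<forall>\<^sub>F N in sequentially. norm ((b - a) / real N * (\<Sum>i<N. g (a + (real i + 1/2) * ((b - a) / real N))) - integral {a..b} g) \<le> L * (b - a)^2 / real N"
      using eventually_gt_at_top[of 0]
      by eventually_elim (use riemann_bound[OF ab _ cont L lip] in auto)
    show "(\<lambda>N. L * (b - a)^2 / real N) \<longlonglongrightarrow> 0" by (rule lim_const_over_n)
  qed
  then show ?thesis by (simp add: LIM_zero_iff)
qed

definition th :: "nat \<Rightarrow> nat \<Rightarrow> real" where
  "th N i = - (pi/2) + (real i + 1/2) * (pi / real N)"

lemma W_riemann: "(\<lambda>N. pi / real N * (\<Sum>i<N. cos (th N i) ^ a * sin (th N i) ^ b)) \<longlonglongrightarrow> W a b"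
proof -
  have "(\<lambda>N. (pi/2 - -(pi/2)) / real N * (\<Sum>i<N. (\<lambda>t. cos t ^ a * sin t ^ b) (-(pi/2) + (real i + 1/2) * ((pi/2 - -(pi/2)) / real N))))
     \<longlonglongrightarrow> integral {-(pi/2)..pi/2} (\<lambda>t. cos t ^ a * sin t ^ b)"
    by (rule riemann_tendsto[where L="real (a+b)"]) (auto intro!: continuous_intros simp del: of_nat_add intro: cs_lip)
  then show ?thesis by (simp add: W_def th_def)
qed

lemma th_range: "i < N \<Longrightarrow> - (pi/2) < th N i \<and> th N i < pi/2"
proof -
  assume i: "i < N"
  then have N: "real N > 0" by simp
  have "0 < (real i + 1/2) * (pi / real N)" using N by (simp add: pi_gt_zero)
  moreover have "(real i + 1/2) * (pi / real N) < pi"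
  proof -
    have "real i + 1/2 < real N" using i by linarith
    then have "(real i + 1/2) / real N < 1" using N by simp
    then have "(real i + 1/2) / real N * pi < 1 * pi" using pi_gt_zero by (intro mult_strict_right_mono) auto
    then show ?thesis by (simp add: field_simps)
  qed
  ultimately show ?thesis unfolding th_def by linarith
qed

lemma cos_th_pos: "i < N \<Longrightarrow> cos (th N i) > 0"
  using th_range[of i N] by (intro cos_gt_zero_pi) auto


definition odp :: "nat \<Rightarrow> real" where "odp j = (\<Prod>i<j. real (2*i+1))"
definition mm :: "nat \<Rightarrow> nat \<Rightarrow> real" where "mm n k = (\<Prod>i<k. real (2*i+1) / real (n+2*i))"
definition MM :: "nat \<Rightarrow> nat \<Rightarrow> real \<Rightarrow> real" where
  "MM n p r = (if even p then mm n (p div 2) * r^p else 0)"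
definition beta :: "nat \<Rightarrow> nat \<Rightarrow> nat \<Rightarrow> real" where "beta m l k = W (m+l) k / W m 0"

lemma prod_split: fixes f :: "nat \<Rightarrow> real" and j l :: nat shows "(\<Prod>i<j+l. f i) = (\<Prod>i<j. f i) * (\<Prod>i<l. f (j+i))"
  by (induction l) (auto simp: mult_ac)

lemma beta_even: "beta m (2*j) (2*l) = (\<Prod>i<j. real (m+2*i+1) / real (m+2*i+2)) * (\<Prod>i<l. real (2*i+1) / real (m+2*j+2*i+2))"
proof -
  have "W (m + 2*j) (2*l) = W (m+2*j) 0 * (\<Prod>i<l. real (2*i+1) / real (m+2*j+2*i+2))"
    by (rule W_even_b)
  also have "W (m+2*j) 0 = W m 0 * (\<Prod>i<j. real (m+2*i+1) / real (m+2*i+2))"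
    by (rule W_even_a)
  finally show ?thesis using W_pos[of m] by (simp add: beta_def)
qed

lemma beta_odd: "beta m l (2*i+1) = 0"
  using W_odd[of "m+l" i] by (simp add: beta_def)

lemma odp_fact: "odp j * 2^j * fact j = fact (2*j)"
proof (induction j)
  case 0 then show ?case by (simp add: odp_def)
next
  case (Suc j)
  have "odp (Suc j) * 2^Suc j * fact (Suc j) = (odp j * 2^j * fact j) * (real (2*j+1) * 2 * real (Suc j))"
    by (simp add: odp_def algebra_simps)
  also have "\<dots> = fact (2*j) * (real (2*j+1) * real (2*j+2))" using Suc by (simp add: algebra_simps)
  also have "\<dots> = fact (2 * Suc j)"
    by (simp add: algebra_simps)
  finally show ?case .
qed

lemma odp_pos: "odp j > 0" by (simp add: odp_def prod_pos)

lemma comb_id: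
  assumes "j \<le> k"
  shows "real (2*k choose 2*j) * odp j * odp (k-j) = real (k choose j) * odp k"
proof -
  have f1': "fact (2*j) * fact (2*k - 2*j) * real (2*k choose 2*j) = (fact (2*k) :: real)"
    using arg_cong[OF binomial_fact_lemma[of "2*j" "2*k"], of real] assms by simp
  have f2: "fact j * fact (k - j) * real (k choose j) = (fact k :: real)"
    using arg_cong[OF binomial_fact_lemma[of j k], of real] assms by simp
  have e: "2*k - 2*j = 2*(k-j)" by simp
  define X where "X = (2^j * fact j * 2^(k-j) * fact (k-j) :: real)"
  have nz: "X \<noteq> 0" by (simp add: X_def)
  have "real (2*k choose 2*j) * odp j * odp (k-j) * X
      = real (2*k choose 2*j) * (odp j * 2^j * fact j) * (odp (k-j) * 2^(k-j) * fact (k-j))"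
    by (simp add: X_def mult_ac)
  also have "\<dots> = real (2*k choose 2*j) * fact (2*j) * fact (2*(k-j))"
    by (simp only: odp_fact)
  also have "\<dots> = fact (2*k)" using f1' e by (simp add: mult_ac)
  also have "\<dots> = odp k * 2^k * fact k" by (simp only: odp_fact)
  also have "\<dots> = real (k choose j) * odp k * X"
  proof -
    have "(2::real)^k = 2^j * 2^(k-j)" using assms by (simp flip: power_add)
    then have "odp k * 2^k * fact k = odp k * (2^j * 2^(k-j)) * (fact j * fact (k - j) * real (k choose j))"
      using f2 by simp
    then show ?thesis by (simp add: X_def mult_ac)
  qed
  finally show ?thesis using nz by simp
qed

lemma term_id:
  assumes jk: "j \<le> k"
  shows "real (2*k choose 2*j) * mm (Suc m) j * beta m (2*j) (2*(k-j)) = real (k choose j) * mm (Suc (Suc m)) k"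
proof -
  define l where "l = k - j"
  have kjl: "k = j + l" using jk by (simp add: l_def)
  have a: "mm (Suc m) j * (\<Prod>i<j. real (m+2*i+1) / real (m+2*i+2)) = (\<Prod>i<j. real (2*i+1) / real (m+2+2*i))"
    unfolding mm_def prod.distrib[symmetric]
  proof (intro prod.cong refl)
    fix x
    have gen: "\<And>a A B::real. A \<noteq> 0 \<Longrightarrow> a / A * (A / B) = a / B"
      by (case_tac "B = 0") (auto simp: field_simps)
    have e1: "Suc m + 2*x = m+2*x+1" by simp
    have e2: "m+2+2*x = m+2*x+2" by simp
    show "real (2*x+1) / real (Suc m + 2*x) * (real (m+2*x+1) / real (m+2*x+2)) = real (2*x+1) / real (m+2+2*x)"
      unfolding e1 e2 by (rule gen) (simp del: of_nat_add)
  qed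
  have b: "(\<Prod>i<j. real (2*i+1) / real (m+2+2*i)) * (\<Prod>i<l. real (2*i+1) / real (m+2*j+2*i+2))
      = odp j * odp l / (\<Prod>i<k. real (m+2+2*i))"
    unfolding kjl prod_split prod_dividef odp_def by (simp add: algebra_simps)
  have c: "mm (Suc (Suc m)) k = odp k / (\<Prod>i<k. real (m+2+2*i))"
    unfolding mm_def prod_dividef odp_def by simp
  have "real (2*k choose 2*j) * mm (Suc m) j * beta m (2*j) (2*(k-j))
      = real (2*k choose 2*j) * (odp j * odp l / (\<Prod>i<k. real (m+2+2*i)))"
    unfolding beta_even l_def[symmetric] by (simp only: mult.assoc a[symmetric] b[symmetric])
  also have "\<dots> = real (2*k choose 2*j) * odp j * odp (k-j) / (\<Prod>i<k. real (m+2+2*i))"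
    by (simp add: l_def)
  also have "\<dots> = real (k choose j) * mm (Suc (Suc m)) k"
    using comb_id[OF jk] c by simp
  finally show ?thesis .
qed

lemma sum_even_split: fixes f :: "nat \<Rightarrow> real" shows "(\<Sum>l\<le>2*k. f l) = (\<Sum>j\<le>k. f (2*j)) + (\<Sum>j<k. f (2*j+1))"
proof (induction k)
  case 0 then show ?case by simp
next
  case (Suc k)
  have "(\<Sum>l\<le>2*Suc k. f l) = (\<Sum>l\<le>2*k. f l) + f (2*k+1) + f (2*k+2)"
    by (simp add: numeral_2_eq_2)
  then show ?case using Suc by simp
qed

lemma ideal_id:
  assumes r: "r \<ge> 0"
  shows "(\<Sum>l\<le>p. real (p choose l) * s^(p-l) * MM (Suc m) l r * beta m l (p-l)) = MM (Suc (Suc m)) p (sqrt (r^2 + s^2))"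
proof (cases "even p")
  case False
  have "real (p choose l) * s^(p-l) * MM (Suc m) l r * beta m l (p-l) = 0" if "l \<le> p" for l
  proof (cases "even l")
    case True
    then have "odd (p - l)" using False that by auto
    then obtain i where "p - l = 2*i+1" using oddE by blast
    then show ?thesis using beta_odd[of m l i] by simp
  qed (simp add: MM_def)
  then have "(\<Sum>l\<le>p. real (p choose l) * s^(p-l) * MM (Suc m) l r * beta m l (p-l)) = 0"
    by (intro sum.neutral) auto
  then show ?thesis using False by (simp add: MM_def)
next
  case True
  then obtain k where p: "p = 2*k" by blast
  have "(\<Sum>l\<le>p. real (p choose l) * s^(p-l) * MM (Suc m) l r * beta m l (p-l))
      = (\<Sum>j\<le>k. real (2*k choose 2*j) * s^(2*k-2*j) * MM (Suc m) (2*j) r * beta m (2*j) (2*k-2*j))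
        + (\<Sum>j<k. real (2*k choose (2*j+1)) * s^(2*k-(2*j+1)) * MM (Suc m) (2*j+1) r * beta m (2*j+1) (2*k-(2*j+1)))"
    unfolding p by (rule sum_even_split)
  also have "(\<Sum>j<k. real (2*k choose (2*j+1)) * s^(2*k-(2*j+1)) * MM (Suc m) (2*j+1) r * beta m (2*j+1) (2*k-(2*j+1))) = 0"
    by (simp add: MM_def)
  also have "(\<Sum>j\<le>k. real (2*k choose 2*j) * s^(2*k-2*j) * MM (Suc m) (2*j) r * beta m (2*j) (2*k-2*j))
      = (\<Sum>j\<le>k. mm (Suc (Suc m)) k * (real (k choose j) * (r^2)^j * (s^2)^(k-j)))"
  proof (intro sum.cong refl)
    fix j assume "j \<in> {..k}"
    then have jk: "j \<le> k" by simp
    have e: "2*k - 2*j = 2*(k-j)" by simp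
    have "real (2*k choose 2*j) * s^(2*k-2*j) * MM (Suc m) (2*j) r * beta m (2*j) (2*k-2*j)
        = (real (2*k choose 2*j) * mm (Suc m) j * beta m (2*j) (2*(k-j))) * (r^(2*j) * s^(2*(k-j)))"
    proof -
      have M: "MM (Suc m) (2*j) r = mm (Suc m) j * r^(2*j)" by (simp add: MM_def)
      show ?thesis unfolding e M by (simp only: mult_ac)
    qed
    also have "\<dots> = real (k choose j) * mm (Suc (Suc m)) k * (r^(2*j) * s^(2*(k-j)))"
      by (simp add: term_id[OF jk])
    also have "\<dots> = mm (Suc (Suc m)) k * (real (k choose j) * (r^2)^j * (s^2)^(k-j))"
      unfolding power_mult by (simp only: mult_ac)
    finally show "real (2*k choose 2*j) * s^(2*k-2*j) * MM (Suc m) (2*j) r * beta m (2*j) (2*k-2*j)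
        = mm (Suc (Suc m)) k * (real (k choose j) * (r^2)^j * (s^2)^(k-j))" .
  qed
  also have "\<dots> = mm (Suc (Suc m)) k * (r^2 + s^2)^k"
    by (simp add: binomial_ring sum_distrib_left)
  also have "\<dots> = MM (Suc (Suc m)) p (sqrt (r^2 + s^2))"
    by (simp add: MM_def p power_mult)
  finally show ?thesis by simp
qed


definition wts :: "nat \<Rightarrow> nat \<Rightarrow> nat \<Rightarrow> real" where
  "wts N m i = cos (th N i) ^ m / (\<Sum>j<N. cos (th N j) ^ m)"

definition lift :: "nat \<Rightarrow> real \<Rightarrow> (nat \<Rightarrow> real) \<Rightarrow> (nat \<Rightarrow> real)" where
  "lift n t v = (\<lambda>j. if j < n then cos t * v j else if j = n then sin t else 0)"

definition step :: "nat \<Rightarrow> nat \<Rightarrow> (real \<times> (nat \<Rightarrow> real)) list \<Rightarrow> (real \<times> (nat \<Rightarrow> real)) list" where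
  "step m N Q = concat (map (\<lambda>i. map (\<lambda>p. (wts N m i * fst p, lift (Suc m) (th N i) (snd p))) Q) [0..<N])"

definition good :: "nat \<Rightarrow> (real \<times> (nat \<Rightarrow> real)) list \<Rightarrow> bool" where
  "good n Q = ((\<forall>p\<in>set Q. 0 \<le> fst p \<and> dinner n (snd p) (snd p) = 1) \<and> (\<Sum>p\<leftarrow>Q. fst p) = 1)"

definition bN :: "nat \<Rightarrow> nat \<Rightarrow> nat \<Rightarrow> nat \<Rightarrow> real" where
  "bN N m l k = (\<Sum>i<N. wts N m i * (cos (th N i) ^ l * sin (th N i) ^ k))"

lemma EQ_concat: "EQ (concat (map g xs)) f = (\<Sum>x\<leftarrow>xs. EQ (g x) f)"
  by (induction xs) auto

lemma EQ_map: "EQ (map (\<lambda>p. (w * fst p, h (snd p))) Q) f = w * EQ Q (\<lambda>v. f (h v))"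
  by (induction Q) (auto simp: algebra_simps)

lemma EQ_step: "EQ (step m N Q) f = (\<Sum>i<N. wts N m i * EQ Q (\<lambda>v. f (lift (Suc m) (th N i) v)))"
  unfolding step_def EQ_concat EQ_map
  by (simp add: interv_sum_list_conv_sum_set_nat atLeast0LessThan)

lemma EQ_one: "EQ Q (\<lambda>v. 1) = (\<Sum>p\<leftarrow>Q. fst p)"
  by (simp add: EQ_const)

lemma wts_nonneg: "i < N \<Longrightarrow> wts N m i \<ge> 0"
  unfolding wts_def using cos_th_pos
  by (intro divide_nonneg_nonneg sum_nonneg zero_le_power) (auto intro: less_imp_le)

lemma wts_sum: "N > 0 \<Longrightarrow> (\<Sum>i<N. wts N m i) = 1"
proof -
  assume N: "N > 0"
  have "(\<Sum>j<N. cos (th N j) ^ m) > 0"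
    using N cos_th_pos by (intro sum_pos) auto
  then show ?thesis unfolding wts_def by (simp add: sum_divide_distrib[symmetric])
qed

lemma dinner_lift: "dinner (Suc n) (lift n t v) x = cos t * dinner n v x + sin t * x n"
  by (simp add: dinner_Suc dinner_def lift_def sum_distrib_left mult.assoc)

lemma dinner_lift_self: "dinner (Suc n) (lift n t v) (lift n t v) = (cos t)^2 * dinner n v v + (sin t)^2"
proof -
  have "dinner n (lift n t v) (lift n t v) = (cos t)^2 * dinner n v v"
    by (simp add: dinner_def lift_def sum_distrib_left power2_eq_square mult_ac)
  then show ?thesis by (simp add: dinner_Suc lift_def power2_eq_square)
qed

lemma good_step:
  assumes g: "good (Suc m) Q" and N: "N > 0"
  shows "good (Suc (Suc m)) (step m N Q)"
proof -
  have "(\<Sum>p\<leftarrow>step m N Q. fst p) = 1"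
  proof -
    have "(\<Sum>p\<leftarrow>step m N Q. fst p) = EQ (step m N Q) (\<lambda>v. 1)" by (simp add: EQ_one)
    also have "\<dots> = (\<Sum>i<N. wts N m i * EQ Q (\<lambda>v. 1))" by (simp add: EQ_step)
    also have "\<dots> = (\<Sum>i<N. wts N m i)" using g by (simp add: EQ_one good_def)
    also have "\<dots> = 1" using N by (rule wts_sum)
    finally show ?thesis .
  qed
  moreover have "0 \<le> fst p \<and> dinner (Suc (Suc m)) (snd p) (snd p) = 1" if "p \<in> set (step m N Q)" for p
  proof -
    from that obtain i q where i: "i < N" and q: "q \<in> set Q"
      and p: "p = (wts N m i * fst q, lift (Suc m) (th N i) (snd q))"
      unfolding step_def by auto
    have "0 \<le> fst q" "dinner (Suc m) (snd q) (snd q) = 1" using g q by (auto simp: good_def)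
    moreover have "0 \<le> wts N m i" using i by (rule wts_nonneg)
    ultimately show ?thesis using p by (simp add: dinner_lift_self)
  qed
  ultimately show ?thesis by (simp add: good_def)
qed

lemma EQ_binom: "EQ Q (\<lambda>v. (c * g v + d)^p) = (\<Sum>l\<le>p. real (p choose l) * c^l * d^(p-l) * EQ Q (\<lambda>v. g v ^ l))"
proof -
  have "EQ Q (\<lambda>v. (c * g v + d)^p) = EQ Q (\<lambda>v. \<Sum>l\<le>p. (real (p choose l) * c^l * d^(p-l)) * g v ^ l)"
    by (simp add: binomial_ring power_mult_distrib mult_ac)
  also have "\<dots> = (\<Sum>l\<le>p. EQ Q (\<lambda>v. (real (p choose l) * c^l * d^(p-l)) * g v ^ l))"
    by (rule EQ_sum)
  also have "\<dots> = (\<Sum>l\<le>p. real (p choose l) * c^l * d^(p-l) * EQ Q (\<lambda>v. g v ^ l))"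
    by (simp only: EQ_cmult)
  finally show ?thesis .
qed

lemma moment_step:
  "EQ (step m N Q) (\<lambda>u. dinner (Suc (Suc m)) u x ^ p)
    = (\<Sum>l\<le>p. real (p choose l) * x (Suc m) ^ (p-l) * EQ Q (\<lambda>v. dinner (Suc m) v x ^ l) * bN N m l (p-l))"
proof -
  have "EQ (step m N Q) (\<lambda>u. dinner (Suc (Suc m)) u x ^ p)
      = (\<Sum>i<N. wts N m i * EQ Q (\<lambda>v. (cos (th N i) * dinner (Suc m) v x + sin (th N i) * x (Suc m)) ^ p))"
    by (simp add: EQ_step dinner_lift)
  also have "\<dots> = (\<Sum>i<N. wts N m i * (\<Sum>l\<le>p. real (p choose l) * cos (th N i)^l * (sin (th N i) * x (Suc m))^(p-l) * EQ Q (\<lambda>v. dinner (Suc m) v x ^ l)))"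
    by (simp only: EQ_binom)
  also have "\<dots> = (\<Sum>i<N. \<Sum>l\<le>p. real (p choose l) * x (Suc m) ^ (p-l) * EQ Q (\<lambda>v. dinner (Suc m) v x ^ l) * (wts N m i * (cos (th N i)^l * sin (th N i)^(p-l))))"
    by (intro sum.cong refl) (simp add: sum_distrib_left power_mult_distrib mult_ac)
  also have "\<dots> = (\<Sum>l\<le>p. \<Sum>i<N. real (p choose l) * x (Suc m) ^ (p-l) * EQ Q (\<lambda>v. dinner (Suc m) v x ^ l) * (wts N m i * (cos (th N i)^l * sin (th N i)^(p-l))))"
    by (rule sum.swap)
  also have "\<dots> = (\<Sum>l\<le>p. real (p choose l) * x (Suc m) ^ (p-l) * EQ Q (\<lambda>v. dinner (Suc m) v x ^ l) * bN N m l (p-l))"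
    by (simp add: bN_def sum_distrib_left)
  finally show ?thesis .
qed

lemma bN_bound: "\<bar>bN N m l k\<bar> \<le> 1"
proof (cases "N = 0")
  case True then show ?thesis by (simp add: bN_def)
next
  case False
  have "\<bar>bN N m l k\<bar> \<le> (\<Sum>i<N. \<bar>wts N m i * (cos (th N i) ^ l * sin (th N i) ^ k)\<bar>)"
    unfolding bN_def by (rule sum_abs)
  also have "\<dots> \<le> (\<Sum>i<N. wts N m i * 1)"
  proof (intro sum_mono)
    fix i assume "i \<in> {..<N}"
    then have w: "wts N m i \<ge> 0" by (intro wts_nonneg) auto
    have c1: "\<bar>cos (th N i) ^ l * sin (th N i) ^ k\<bar> \<le> 1"
      by (simp add: abs_mult power_abs) (intro mult_le_one power_le_one, auto)
    have "\<bar>wts N m i * (cos (th N i) ^ l * sin (th N i) ^ k)\<bar> = wts N m i * \<bar>cos (th N i) ^ l * sin (th N i) ^ k\<bar>"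
      using w by (simp add: abs_mult)
    also have "\<dots> \<le> wts N m i * 1" by (rule mult_left_mono[OF c1 w])
    finally show "\<bar>wts N m i * (cos (th N i) ^ l * sin (th N i) ^ k)\<bar> \<le> wts N m i * 1" .
  qed
  also have "\<dots> = 1" using False wts_sum[of N m] by simp
  finally show ?thesis .
qed

lemma bN_tendsto: "(\<lambda>N. bN N m l k) \<longlonglongrightarrow> beta m l k"
proof -
  have lim: "(\<lambda>N. (pi / real N * (\<Sum>i<N. cos (th N i) ^ (m+l) * sin (th N i) ^ k))
       / (pi / real N * (\<Sum>i<N. cos (th N i) ^ m * sin (th N i) ^ 0))) \<longlonglongrightarrow> W (m+l) k / W m 0"
    using W_pos[of m] by (intro tendsto_divide W_riemann) auto
  have ev: "\<forall>\<^sub>F N in sequentially. (pi / real N * (\<Sum>i<N. cos (th N i) ^ (m+l) * sin (th N i) ^ k))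
       / (pi / real N * (\<Sum>i<N. cos (th N i) ^ m * sin (th N i) ^ 0)) = bN N m l k"
    using eventually_gt_at_top[of 0]
  proof eventually_elim
    case (elim N)
    have "pi / real N \<noteq> 0" using elim by simp
    then have "(pi / real N * (\<Sum>i<N. cos (th N i) ^ (m+l) * sin (th N i) ^ k))
       / (pi / real N * (\<Sum>i<N. cos (th N i) ^ m * sin (th N i) ^ 0))
       = (\<Sum>i<N. cos (th N i) ^ (m+l) * sin (th N i) ^ k) / (\<Sum>i<N. cos (th N i) ^ m)"
      by simp
    also have "\<dots> = bN N m l k"
      unfolding bN_def wts_def
      by (simp add: sum_divide_distrib power_add mult_ac)
    finally show ?case .
  qed
  show ?thesis using Lim_transform_eventually[OF lim ev] by (simp add: beta_def)
qed

lemma mm_bounds: "n \<ge> 1 \<Longrightarrow> 0 \<le> mm n k \<and> mm n k \<le> 1"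
  unfolding mm_def by (auto intro!: prod_nonneg prod_le_1)

lemma MM_bound: "n \<ge> 1 \<Longrightarrow> 0 \<le> r \<Longrightarrow> r \<le> 1 \<Longrightarrow> \<bar>MM n p r\<bar> \<le> 1"
  using mm_bounds[of n "p div 2"]
  by (auto simp: MM_def abs_mult intro!: mult_le_one power_le_one)

lemma dinner_self_nonneg: "dinner n x x \<ge> 0"
  by (simp add: dinner_def sum_nonneg)

lemma dnorm_Suc: "dnorm (Suc n) x = sqrt ((dnorm n x)^2 + (x n)^2)"
  using dinner_self_nonneg[of n x] by (simp add: dnorm_def dinner_Suc power2_eq_square)


lemma mm_1: "mm (Suc 0) k = 1"
  unfolding mm_def by (intro prod.neutral) auto

lemma Q_base:
  "\<exists>Q. good 1 Q \<and> (\<forall>x p. dnorm 1 x \<le> 1 \<longrightarrow> p \<le> P \<longrightarrow>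
      \<bar>EQ Q (\<lambda>u. dinner 1 u x ^ p) - MM 1 p (dnorm 1 x)\<bar> \<le> \<eta>) \<or> \<eta> \<le> 0"
proof (cases "\<eta> > 0")
  case True
  define e0 where "e0 = (\<lambda>j::nat. if j = 0 then 1 else (0::real))"
  define e1 where "e1 = (\<lambda>j::nat. if j = 0 then -1 else (0::real))"
  define Q where "Q = [(1/2::real, e0), (1/2, e1)]"
  have d0: "dinner (Suc 0) e0 y = y 0" for y by (simp add: dinner_def e0_def)
  have d1: "dinner (Suc 0) e1 y = - y 0" for y by (simp add: dinner_def e1_def)
  have g: "good 1 Q"
    by (auto simp: good_def Q_def dinner_def e0_def e1_def)
  have "EQ Q (\<lambda>u. dinner 1 u x ^ p) = MM 1 p (dnorm 1 x)" for x p
  proof -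
    have dn: "dnorm (Suc 0) x = \<bar>x 0\<bar>" by (simp add: dnorm_def dinner_def)
    have "EQ Q (\<lambda>u. dinner 1 u x ^ p) = (x 0 ^ p + (- x 0) ^ p) / 2"
      by (simp add: Q_def d0 d1)
    also have "\<dots> = MM 1 p (dnorm 1 x)"
      by (cases "even p") (auto simp: MM_def mm_1 dn power_even_abs)
    finally show ?thesis .
  qed
  then show ?thesis using g True by (intro exI[of _ Q]) auto
qed simp

lemma choose_sum_real: "(\<Sum>l\<le>p. real (p choose l)) = 2^p"
  using arg_cong[OF choose_row_sum[of p], of real] by (simp add: of_nat_sum)

lemma Q_exists:
  assumes "\<eta> > 0"
  shows "\<exists>Q. good (Suc m) Q \<and> (\<forall>x p. dnorm (Suc m) x \<le> 1 \<longrightarrow> p \<le> P \<longrightarrow>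
      \<bar>EQ Q (\<lambda>u. dinner (Suc m) u x ^ p) - MM (Suc m) p (dnorm (Suc m) x)\<bar> \<le> \<eta>)"
  using assms
proof (induction m arbitrary: P \<eta>)
  case 0
  then show ?case using Q_base[of P \<eta>] by simp
next
  case (Suc m)
  define \<eta>1 where "\<eta>1 = \<eta> / 2^(Suc P)"
  have e1: "\<eta>1 > 0" using Suc.prems by (simp add: \<eta>1_def)
  obtain Q where Qg: "good (Suc m) Q" and Qe: "\<And>x p. dnorm (Suc m) x \<le> 1 \<Longrightarrow> p \<le> P \<Longrightarrow>
      \<bar>EQ Q (\<lambda>u. dinner (Suc m) u x ^ p) - MM (Suc m) p (dnorm (Suc m) x)\<bar> \<le> \<eta>1"
    using Suc.IH[OF e1] by blast
  have ev1: "\<forall>\<^sub>F N in sequentially. \<forall>lk\<in>{..P} \<times> {..P}. dist (bN N m (fst lk) (snd lk)) (beta m (fst lk) (snd lk)) < \<eta>1"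
    by (intro eventually_ball_finite ballI tendstoD[OF bN_tendsto e1]) auto
  have "\<forall>\<^sub>F N in sequentially. N > 0 \<and> (\<forall>lk\<in>{..P} \<times> {..P}. dist (bN N m (fst lk) (snd lk)) (beta m (fst lk) (snd lk)) < \<eta>1)"
    using eventually_conj[OF eventually_gt_at_top[of 0] ev1] .
  then obtain N where N: "N > 0" and Nb: "\<And>l k. l \<le> P \<Longrightarrow> k \<le> P \<Longrightarrow> \<bar>bN N m l k - beta m l k\<bar> \<le> \<eta>1"
    unfolding eventually_sequentially dist_real_def
    by (metis (no_types, lifting) atMost_iff le_refl less_le mem_Sigma_iff fst_conv snd_conv)
  define Q' where "Q' = step m N Q"
  have g': "good (Suc (Suc m)) Q'" unfolding Q'_def by (rule good_step[OF Qg N])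
  have "\<bar>EQ Q' (\<lambda>u. dinner (Suc (Suc m)) u x ^ p) - MM (Suc (Suc m)) p (dnorm (Suc (Suc m)) x)\<bar> \<le> \<eta>"
    if x: "dnorm (Suc (Suc m)) x \<le> 1" and p: "p \<le> P" for x p
  proof -
    define r where "r = dnorm (Suc m) x"
    define s where "s = x (Suc m)"
    have r0: "r \<ge> 0" by (simp add: r_def dnorm_def dinner_self_nonneg)
    have ds: "dnorm (Suc (Suc m)) x = sqrt (r^2 + s^2)" by (simp add: r_def s_def dnorm_Suc)
    have rs1: "r^2 + s^2 \<le> 1" using x ds by simp
    have r1: "r \<le> 1" using rs1 r0 by (metis abs_square_le_1 abs_of_nonneg add_le_same_cancel1 le_add_same_cancel1 order_trans zero_le_power2)
    have s1: "\<bar>s\<bar> \<le> 1" using rs1 r0 by (metis abs_square_le_1 le_add_same_cancel2 order_trans zero_le_power2)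
    define A where "A = (\<lambda>l. EQ Q (\<lambda>v. dinner (Suc m) v x ^ l))"
    define M where "M = (\<lambda>l. MM (Suc m) l r)"
    have tm: "\<bar>real (p choose l) * s^(p-l) * (A l * bN N m l (p-l) - M l * beta m l (p-l))\<bar> \<le> real (p choose l) * (2 * \<eta>1)"
      if l: "l \<le> p" for l
    proof -
      have Al: "\<bar>A l - M l\<bar> \<le> \<eta>1" unfolding A_def M_def r_def
        using Qe[of x l] r1 l p by (simp add: r_def)
      have bl: "\<bar>bN N m l (p-l) - beta m l (p-l)\<bar> \<le> \<eta>1" using Nb l p by simp
      have Ml: "\<bar>M l\<bar> \<le> 1" unfolding M_def using MM_bound[of "Suc m" r l] r0 r1 by simp
      have b1: "\<bar>bN N m l (p-l)\<bar> \<le> 1" by (rule bN_bound)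
      have "A l * bN N m l (p-l) - M l * beta m l (p-l) = (A l - M l) * bN N m l (p-l) + M l * (bN N m l (p-l) - beta m l (p-l))"
        by (simp add: algebra_simps)
      then have "\<bar>A l * bN N m l (p-l) - M l * beta m l (p-l)\<bar> \<le> \<bar>A l - M l\<bar> * \<bar>bN N m l (p-l)\<bar> + \<bar>M l\<bar> * \<bar>bN N m l (p-l) - beta m l (p-l)\<bar>"
        by (metis abs_mult abs_triangle_ineq)
      also have "\<dots> \<le> \<eta>1 * 1 + 1 * \<eta>1"
        using Al bl Ml b1 e1 by (intro add_mono mult_mono) auto
      finally have ab: "\<bar>A l * bN N m l (p-l) - M l * beta m l (p-l)\<bar> \<le> 2 * \<eta>1" by simp
      have sp: "\<bar>s^(p-l)\<bar> \<le> 1" using s1 by (simp add: power_abs power_le_one)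
      have "\<bar>real (p choose l) * s^(p-l) * (A l * bN N m l (p-l) - M l * beta m l (p-l))\<bar>
          = real (p choose l) * (\<bar>s^(p-l)\<bar> * \<bar>A l * bN N m l (p-l) - M l * beta m l (p-l)\<bar>)"
        by (simp add: abs_mult)
      also have "\<dots> \<le> real (p choose l) * (1 * (2 * \<eta>1))"
        using sp ab e1 by (intro mult_left_mono mult_mono) auto
      finally show ?thesis by simp
    qed
    have "EQ Q' (\<lambda>u. dinner (Suc (Suc m)) u x ^ p) - MM (Suc (Suc m)) p (dnorm (Suc (Suc m)) x)
        = (\<Sum>l\<le>p. real (p choose l) * s^(p-l) * A l * bN N m l (p-l))
          - (\<Sum>l\<le>p. real (p choose l) * s^(p-l) * M l * beta m l (p-l))"
      unfolding Q'_def moment_step ds ideal_id[OF r0, symmetric] by (simp add: A_def M_def s_def)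
    also have "\<dots> = (\<Sum>l\<le>p. real (p choose l) * s^(p-l) * (A l * bN N m l (p-l) - M l * beta m l (p-l)))"
      by (simp add: sum_subtractf[symmetric] algebra_simps)
    finally have eq: "EQ Q' (\<lambda>u. dinner (Suc (Suc m)) u x ^ p) - MM (Suc (Suc m)) p (dnorm (Suc (Suc m)) x)
        = (\<Sum>l\<le>p. real (p choose l) * s^(p-l) * (A l * bN N m l (p-l) - M l * beta m l (p-l)))" .
    have "\<bar>\<Sum>l\<le>p. real (p choose l) * s^(p-l) * (A l * bN N m l (p-l) - M l * beta m l (p-l))\<bar>
        \<le> (\<Sum>l\<le>p. real (p choose l) * (2 * \<eta>1))"
      by (rule order_trans[OF sum_abs]) (intro sum_mono tm, simp)
    also have "\<dots> = 2^p * (2 * \<eta>1)" by (simp add: sum_distrib_right[symmetric] choose_sum_real)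
    also have "\<dots> \<le> 2^P * (2 * \<eta>1)"
      using p e1 by (intro mult_right_mono power_increasing) auto
    also have "\<dots> = \<eta>" by (simp add: \<eta>1_def)
    finally show ?thesis using eq by simp
  qed
  then show ?case using g' by blast
qed


lemma dfact_0[simp]: "dfact 0 = 1" by (simp add: dfact_def)
lemma dfact_1[simp]: "dfact (Suc 0) = 1" by (simp add: dfact_def)
lemma dfact_SS: "dfact (Suc (Suc k)) = Suc (Suc k) * dfact k"
proof -
  have e: "(Suc (Suc k) + 1) div 2 = Suc ((k + 1) div 2)" by simp
  show ?thesis unfolding dfact_def e prod.lessThan_Suc_shift by simp
qed

lemma dfact_pos: "dfact k > 0"
proof (induction k rule: less_induct)
  case (less k)
  show ?case
  proof (cases k)
    case 0 then show ?thesis by simp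
  next
    case (Suc k')
    show ?thesis
    proof (cases k')
      case 0 then show ?thesis using Suc by simp
    next
      case (Suc k'')
      then show ?thesis using \<open>k = Suc k'\<close> less[of k''] by (simp add: dfact_SS)
    qed
  qed
qed

lemma dfact_even: "real (dfact (2*k)) * odp k = fact (2*k)"
proof (induction k)
  case 0 then show ?case by (simp add: odp_def)
next
  case (Suc k)
  have e: "2 * Suc k = Suc (Suc (2*k))" by simp
  have "real (dfact (2 * Suc k)) * odp (Suc k) = (real (dfact (2*k)) * odp k) * (real (2*k+2) * real (2*k+1))"
    unfolding e dfact_SS by (simp add: odp_def algebra_simps)
  also have "\<dots> = fact (2 * Suc k)" using Suc unfolding e by (simp add: algebra_simps)
  finally show ?case .
qed

lemma dfact_shift:
  assumes "d \<ge> 2"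
  shows "real (dfact (d + 2*k - 2)) = real (dfact (d-2)) * (\<Prod>i<k. real (d+2*i))"
proof (induction k)
  case 0 then show ?case by simp
next
  case (Suc k)
  have e: "d + 2 * Suc k - 2 = Suc (Suc (d + 2*k - 2))" using assms by simp
  have e2: "real (Suc (Suc (d + 2*k - 2))) = real (d + 2*k)" using assms by simp
  show ?case unfolding e dfact_SS of_nat_mult e2 Suc by (simp add: algebra_simps)
qed

lemma coef_eq:
  assumes "d \<ge> 2"
  shows "real (dfact (d - 2)) / (real (dfact (2 * k)) * real (dfact (d + 2 * k - 2))) = mm d k / fact (2*k)"
proof -
  have p0: "real (dfact (d-2)) > 0" using dfact_pos by simp
  have p1: "real (dfact (2*k)) > 0" using dfact_pos by simp
  have p2: "(\<Prod>i<k. real (d+2*i)) > 0" using assms by (intro prod_pos) auto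
  have o0: "odp k > 0" by (rule odp_pos)
  have mmk: "mm d k = odp k / (\<Prod>i<k. real (d+2*i))"
    unfolding mm_def odp_def prod_dividef by simp
  show ?thesis
    unfolding dfact_shift[OF assms] mmk dfact_even[symmetric]
    using p0 p1 p2 o0 by (simp add: field_simps)
qed

lemma MM_abs_le: "n \<ge> 1 \<Longrightarrow> \<bar>MM n p z\<bar> \<le> \<bar>z\<bar>^p"
  using mm_bounds[of n "p div 2"]
  by (auto simp: MM_def abs_mult power_abs intro!: mult_left_le_one_le)

lemma F_sums:
  assumes d: "d \<ge> 2"
  shows "(\<lambda>p. MM d p z / fact p) sums F d z"
proof -
  define f where "f p = MM d p z / fact p" for p
  have sg: "summable (\<lambda>p. \<bar>z\<bar>^p / fact p)"
    using summable_exp[of "\<bar>z\<bar>"] by (simp add: divide_inverse mult.commute)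
  have sf: "summable f"
  proof (rule summable_comparison_test'[OF sg])
    fix p :: nat
    have "\<bar>MM d p z\<bar> / fact p \<le> \<bar>z\<bar>^p / fact p"
      using MM_abs_le[of d p z] d by (intro divide_right_mono) auto
    then show "norm (f p) \<le> \<bar>z\<bar>^p / fact p" by (simp add: f_def abs_divide)
  qed
  have sm: "strict_mono (\<lambda>k::nat. 2*k)" by (simp add: strict_mono_def)
  have z: "f p = 0" if "p \<notin> range (\<lambda>k::nat. 2*k)" for p
  proof -
    have "odd p" using that by (metis evenE rangeI)
    then show ?thesis by (simp add: f_def MM_def)
  qed
  have s1: "(\<lambda>k. f (2*k)) sums suminf f"
    using sums_mono_reindex[of "\<lambda>k. 2*k" f, OF sm z] summable_sums[OF sf] by blast
  have fk: "f (2*k) = real (dfact (d - 2)) / (real (dfact (2 * k)) * real (dfact (d + 2 * k - 2))) * z ^ (2 * k)" for k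
    by (simp add: f_def MM_def coef_eq[OF d])
  have "F d z = suminf f"
    unfolding F_def using sums_unique[OF s1] fk by simp
  then show ?thesis using summable_sums[OF sf] by (simp add: f_def[abs_def])
qed

lemma EQ_sums: "(\<And>u. (\<lambda>p. h p u) sums H u) \<Longrightarrow> (\<lambda>p. EQ Q (h p)) sums EQ Q H"
proof (induction Q)
  case Nil then show ?case by simp
next
  case (Cons q Q)
  have "(\<lambda>p. fst q * h p (snd q) + EQ Q (h p)) sums (fst q * H (snd q) + EQ Q H)"
    by (intro sums_add sums_mult Cons)
  then show ?case by simp
qed

lemma dinner_abs_le:
  assumes "dinner d u u = 1" "dinner d x x \<le> 1"
  shows "\<bar>dinner d u x\<bar> \<le> 1"
proof -
  have "(dinner d u x)^2 \<le> dinner d u u * dinner d x x"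
    unfolding dinner_def using Cauchy_Schwarz_ineq_sum[of "\<lambda>j. u j" "\<lambda>j. x j" "{..<d}"]
    by (simp add: power2_eq_square)
  also have "\<dots> \<le> 1" using assms by simp
  finally show ?thesis by (simp add: abs_square_le_1)
qed

lemma esum_sums: "(\<lambda>p. 1 / fact p) sums exp (1::real)"
  using exp_sums_real[of 1] by simp

lemma tail_bound:
  fixes a :: "nat \<Rightarrow> real"
  assumes s: "a sums D" and a1: "\<And>p. p < P \<Longrightarrow> \<bar>a p\<bar> \<le> \<eta> / fact p"
    and a2: "\<And>p. \<bar>a p\<bar> \<le> 2 / fact p" and e: "\<eta> \<ge> 0"
  shows "\<bar>D\<bar> \<le> \<eta> * exp 1 + 2 * (exp 1 - (\<Sum>p<P. 1 / fact p))"
proof -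
  define T :: real where "T = exp 1 - (\<Sum>p<P. 1 / fact p)"
  have sa: "(\<lambda>i. a (i + P)) sums (D - (\<Sum>p<P. a p))"
    using s sums_iff_shift[of a P "D - (\<Sum>p<P. a p)"] by simp
  have se: "(\<lambda>i. 2 / fact (i + P)) sums (2 * T)"
  proof -
    have "(\<lambda>i. 1 / fact (i + P)) sums T"
      using esum_sums sums_iff_shift[of "\<lambda>p. 1 / (fact p :: real)" P T] by (simp add: T_def)
    from sums_mult[OF this, of 2] show ?thesis by simp
  qed
  have u1: "D - (\<Sum>p<P. a p) \<le> 2 * T"
    by (rule sums_le[OF _ sa se]) (use a2 in \<open>simp add: abs_le_iff\<close>)
  have u2: "- (D - (\<Sum>p<P. a p)) \<le> 2 * T"
    by (rule sums_le[OF _ sums_minus[OF sa] se]) (use a2 in \<open>simp add: abs_le_iff\<close>)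
  have "\<bar>\<Sum>p<P. a p\<bar> \<le> (\<Sum>p<P. \<eta> / fact p)"
    by (rule order_trans[OF sum_abs]) (intro sum_mono a1, simp)
  also have "\<dots> = \<eta> * (\<Sum>p<P. 1 / fact p)" by (simp add: sum_distrib_left)
  also have "\<dots> \<le> \<eta> * exp 1"
  proof (intro mult_left_mono e)
    have "(\<Sum>p<P. 1 / fact p) \<le> suminf (\<lambda>p. 1 / (fact p :: real))"
      by (intro sum_le_suminf sums_summable[OF esum_sums]) auto
    then show "(\<Sum>p<P. 1 / fact p) \<le> exp (1::real)" using sums_unique[OF esum_sums] by simp
  qed
  finally have "\<bar>\<Sum>p<P. a p\<bar> \<le> \<eta> * exp 1" .
  then show ?thesis using u1 u2 unfolding T_def by linarith
qed

lemma Q_F_approx: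
  assumes d: "d \<ge> 2" and del: "\<delta> > 0"
  shows "\<exists>Q. good d Q \<and> (\<forall>x. dnorm d x \<le> 1 \<longrightarrow> \<bar>EQ Q (\<lambda>u. exp (dinner d u x)) - F d (dnorm d x)\<bar> \<le> \<delta>)"
proof -
  have "(\<lambda>n. \<Sum>p<n. 1 / fact p) \<longlonglongrightarrow> exp (1::real)" using esum_sums by (simp add: sums_def)
  from LIMSEQ_D[OF this, of "\<delta>/4"] del obtain N0 where
    N0: "\<And>n. n \<ge> N0 \<Longrightarrow> norm ((\<Sum>p<n. 1 / fact p) - exp (1::real)) < \<delta>/4" by auto
  define P where "P = N0"
  have tail: "exp 1 - (\<Sum>p<Suc P. 1 / fact p) \<le> \<delta>/4"
  proof -
    have "norm ((\<Sum>p<Suc P. 1 / fact p) - exp (1::real)) < \<delta>/4" using N0[of "Suc P"] by (simp add: P_def)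
    then show ?thesis unfolding real_norm_def by (simp only: abs_less_iff) linarith
  qed
  define \<eta> where "\<eta> = \<delta> / 6"
  have eta: "\<eta> > 0" using del by (simp add: \<eta>_def)
  obtain m where m: "d = Suc m" using d by (cases d) auto
  obtain Q where Qg: "good (Suc m) Q" and Qe: "\<And>x p. dnorm (Suc m) x \<le> 1 \<Longrightarrow> p \<le> P \<Longrightarrow>
      \<bar>EQ Q (\<lambda>u. dinner (Suc m) u x ^ p) - MM (Suc m) p (dnorm (Suc m) x)\<bar> \<le> \<eta>"
    using Q_exists[OF eta, of m P] by blast
  have "\<bar>EQ Q (\<lambda>u. exp (dinner d u x)) - F d (dnorm d x)\<bar> \<le> \<delta>" if x: "dnorm d x \<le> 1" for x
  proof -
    define r where "r = dnorm d x"
    have r0: "0 \<le> r" by (simp add: r_def dnorm_def dinner_self_nonneg)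
    have r1: "r \<le> 1" using x by (simp add: r_def)
    have xx: "dinner d x x \<le> 1" using x by (simp add: dnorm_def)
    define a where "a p = (EQ Q (\<lambda>u. dinner d u x ^ p) - MM d p r) / fact p" for p
    have s1: "(\<lambda>p. EQ Q (\<lambda>u. dinner d u x ^ p) / fact p) sums EQ Q (\<lambda>u. exp (dinner d u x))"
    proof -
      have "(\<lambda>p. EQ Q (\<lambda>u. dinner d u x ^ p / fact p)) sums EQ Q (\<lambda>u. exp (dinner d u x))"
        by (rule EQ_sums) (rule exp_sums_real)
      moreover have "EQ Q (\<lambda>u. dinner d u x ^ p / fact p) = EQ Q (\<lambda>u. dinner d u x ^ p) / fact p" for p
        using EQ_cmult[of Q "1 / fact p" "\<lambda>u. dinner d u x ^ p"] by simp
      ultimately show ?thesis by simp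
    qed
    have s: "a sums (EQ Q (\<lambda>u. exp (dinner d u x)) - F d r)"
      unfolding a_def diff_divide_distrib by (intro sums_diff s1 F_sums d)
    have a1: "\<bar>a p\<bar> \<le> \<eta> / fact p" if "p < Suc P" for p
      using Qe[of x p] that x m unfolding a_def r_def
      by (simp add: abs_divide divide_right_mono)
    have a2: "\<bar>a p\<bar> \<le> 2 / fact p" for p
    proof -
      have "\<bar>EQ Q (\<lambda>u. dinner d u x ^ p)\<bar> \<le> EQ Q (\<lambda>u. \<bar>dinner d u x ^ p\<bar>)"
        by (rule EQ_abs) (use Qg m in \<open>auto simp: good_def\<close>)
      also have "\<dots> \<le> EQ Q (\<lambda>u. 1)"
      proof (rule EQ_mono)
        show "0 \<le> fst q" if "q \<in> set Q" for q using Qg m that by (auto simp: good_def)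
        show "\<bar>dinner d (snd q) x ^ p\<bar> \<le> 1" if "q \<in> set Q" for q
        proof -
          have "dinner d (snd q) (snd q) = 1" using Qg m that by (auto simp: good_def)
          then have "\<bar>dinner d (snd q) x\<bar> \<le> 1" using xx by (rule dinner_abs_le)
          then show ?thesis by (simp add: power_abs power_le_one)
        qed
      qed
      also have "\<dots> = 1" using Qg m by (simp add: EQ_const good_def)
      finally have "\<bar>EQ Q (\<lambda>u. dinner d u x ^ p)\<bar> \<le> 1" .
      moreover have "\<bar>MM d p r\<bar> \<le> 1" using MM_bound[of d r p] r0 r1 d by simp
      ultimately have "\<bar>EQ Q (\<lambda>u. dinner d u x ^ p) - MM d p r\<bar> \<le> 2" by linarith
      then show ?thesis unfolding a_def by (simp add: abs_divide divide_right_mono)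
    qed
    have "\<bar>EQ Q (\<lambda>u. exp (dinner d u x)) - F d r\<bar> \<le> \<eta> * exp 1 + 2 * (exp 1 - (\<Sum>p<Suc P. 1 / fact p))"
      by (rule tail_bound[OF s a1 a2 less_imp_le[OF eta]])
    also have "\<dots> \<le> \<eta> * 3 + 2 * (\<delta>/4)"
      using tail eta exp_le by (intro add_mono mult_left_mono) auto
    also have "\<dots> = \<delta>" by (simp add: \<eta>_def)
    finally show ?thesis by (simp add: r_def)
  qed
  then show ?thesis using Qg m by blast
qed


theorem theorem6:
  fixes \<epsilon> :: real and d :: nat
  assumes "\<epsilon> > 0" and "d \<ge> 2"
  shows "\<exists>(w :: nat \<Rightarrow> nat \<Rightarrow> real) (v :: nat \<Rightarrow> real).
           (let n = nat \<lceil>36 / \<epsilon>\<^sup>2\<rceil> in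
             (\<forall>i\<in>{1..n}. dnorm d (w i) = 1 \<and> \<bar>v i\<bar> \<le> 1 / real n) \<and>
             (\<forall>x. dnorm d x \<le> 1 \<longrightarrow>
                \<bar>(\<Sum>i=1..n. v i * exp (dinner d (w i) x)) - F d (dnorm d x)\<bar> \<le> \<epsilon>))"
proof -
  have eps: "\<epsilon> > 0" and d: "d \<ge> 2" using assms by auto
  define n where "n = nat \<lceil>36 / \<epsilon>\<^sup>2\<rceil>"
  have pos: "36 / \<epsilon>\<^sup>2 > 0" using eps by simp
  have nge: "real n \<ge> 36 / \<epsilon>\<^sup>2" unfolding n_def by (rule real_nat_ceiling_ge)
  have n1: "n \<ge> 1" using nge pos by (cases n) auto
  have npos: "real n > 0" using n1 by simp
  obtain Q where Qg: "good d Q"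
    and QF: "\<And>x. dnorm d x \<le> 1 \<Longrightarrow> \<bar>EQ Q (\<lambda>u. exp (dinner d u x)) - F d (dnorm d x)\<bar> \<le> \<epsilon>/2"
    using Q_F_approx[OF d, of "\<epsilon>/2"] eps by auto
  have Qw: "\<And>p. p \<in> set Q \<Longrightarrow> fst p \<ge> 0" and Qs: "(\<Sum>p\<leftarrow>Q. fst p) = 1"
    and Qu: "\<And>p. p \<in> set Q \<Longrightarrow> dinner d (snd p) (snd p) = 1"
    using Qg by (auto simp: good_def)
  obtain ws where ws: "length ws = n" "set ws \<subseteq> snd ` set Q"
    and app: "\<And>x. dinner d x x \<le> 1 \<Longrightarrow>
        \<bar>(\<Sum>a\<leftarrow>ws. exp (dinner d a x)) / real n - EQ Q (\<lambda>u. exp (dinner d u x))\<bar> \<le> 3 / sqrt (real n)"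
    using kernel_approx[OF Qw Qs Qu n1] by blast
  define w where "w i = ws ! (i - 1)" for i
  define v where "v i = 1 / real n" for i :: nat
  have sq: "3 / sqrt (real n) \<le> \<epsilon> / 2"
  proof -
    have "(6 / \<epsilon>)^2 = 36 / \<epsilon>\<^sup>2" by (simp add: power_divide)
    then have "(6 / \<epsilon>)^2 \<le> real n" using nge by simp
    then have s6: "6 / \<epsilon> \<le> sqrt (real n)" by (rule real_le_rsqrt)
    have "3 / sqrt (real n) \<le> 3 / (6 / \<epsilon>)"
      using s6 eps npos by (intro divide_left_mono) auto
    also have "\<dots> = \<epsilon> / 2" using eps by simp
    finally show ?thesis .
  qed
  have P1: "\<forall>i\<in>{1..n}. dnorm d (w i) = 1 \<and> \<bar>v i\<bar> \<le> 1 / real n"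
  proof
    fix i assume i: "i \<in> {1..n}"
    then have "i - 1 < length ws" using ws(1) by auto
    then have "w i \<in> set ws" unfolding w_def by simp
    then obtain p where "p \<in> set Q" "w i = snd p" using ws(2) by auto
    then have "dinner d (w i) (w i) = 1" using Qu by simp
    then show "dnorm d (w i) = 1 \<and> \<bar>v i\<bar> \<le> 1 / real n" by (simp add: dnorm_def v_def)
  qed
  have P2: "\<forall>x. dnorm d x \<le> 1 \<longrightarrow>
                \<bar>(\<Sum>i=1..n. v i * exp (dinner d (w i) x)) - F d (dnorm d x)\<bar> \<le> \<epsilon>"
  proof (intro allI impI)
    fix x assume x: "dnorm d x \<le> 1"
    have xx: "dinner d x x \<le> 1" using x by (simp add: dnorm_def)
    have sum: "(\<Sum>i=1..n. v i * exp (dinner d (w i) x)) = (\<Sum>a\<leftarrow>ws. exp (dinner d a x)) / real n"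
    proof -
      have "(\<Sum>i=1..n. v i * exp (dinner d (w i) x)) = (\<Sum>i\<in>Suc ` {..<n}. exp (dinner d (ws ! (i - 1)) x)) / real n"
      proof -
        have "{1..n} = Suc ` {..<n}" by (auto simp: image_iff) (metis Suc_pred le_simps(3) lessThan_iff not_one_le_zero zero_less_iff_neq_zero)
        then show ?thesis by (simp add: v_def w_def sum_divide_distrib)
      qed
      also have "\<dots> = (\<Sum>i<n. exp (dinner d (ws ! i) x)) / real n"
        by (subst sum.reindex) auto
      also have "\<dots> = (\<Sum>a\<leftarrow>ws. exp (dinner d a x)) / real n"
        using ws(1) by (simp add: sum_list_sum_nth atLeast0LessThan)
      finally show ?thesis .
    qed
    have "\<bar>(\<Sum>a\<leftarrow>ws. exp (dinner d a x)) / real n - F d (dnorm d x)\<bar>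
        \<le> \<bar>(\<Sum>a\<leftarrow>ws. exp (dinner d a x)) / real n - EQ Q (\<lambda>u. exp (dinner d u x))\<bar>
          + \<bar>EQ Q (\<lambda>u. exp (dinner d u x)) - F d (dnorm d x)\<bar>" by linarith
    also have "\<dots> \<le> \<epsilon>/2 + \<epsilon>/2"
      using app[OF xx] QF[OF x] sq by linarith
    finally show "\<bar>(\<Sum>i=1..n. v i * exp (dinner d (w i) x)) - F d (dnorm d x)\<bar> \<le> \<epsilon>"
      using sum by simp
  qed
  show ?thesis unfolding Let_def n_def[symmetric] using P1 P2 by blast
qed


end
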